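(* Fix $m\ge2$. The functions $k(\ell)=\frac12\log(\ell)-\log\log(\ell)$ and $f(\ell)=\frac{\log(\ell)}{4\ell}-\frac{\log\log(\ell)}{\ell}$ satisfy, as $\ell\to\infty$, $$k(\ell)-2\ell f(\ell)\to\infty \qquad\text{and}\qquad \frac{\ell-2}{(2k(\ell)+2)(2m-1)^{2k(\ell)}}\to\infty .$$ Consequently, a random group in $\mathcal H\big(\frac{\log(\ell)}{4\ell}-\frac{\log\log(\ell)}{\ell}\big)$ is asymptotically almost surely isomorphic to $1$ or to $\mathbb Z/2\mathbb Z$.
   Context: All logarithms are base $2m-1$. The random group model $\mathcal H(f)$: for each length $\ell$, choose $(2m-1)^{\ell(\frac12-f(\ell))}$ relators (an integer count), independently and uniformly at random from the freely reduced words of length $\ell$ (not necessarily cyclically reduced) in $m$ generators and their inverses; the random group is the group so presented. "Asymptotically almost surely" means with probability tending to $1$ as $\ell\to\infty$. *)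

theory Defs
  imports "HOL-Algebra.Elementary_Groups" "HOL-Probability.Probability"
begin

(* Letters: generator index i (< m) and a flag: (i, True) = a_i, (i, False) = a_i^{-1} *)
type_synonym letter = "nat \<times> bool"

definition letters :: "nat \<Rightarrow> letter set" where
  "letters m = {0..<m} \<times> UNIV"

definition inv_letter :: "letter \<Rightarrow> letter" where
  "inv_letter x = (fst x, \<not> snd x)"

definition freely_reduced :: "letter list \<Rightarrow> bool" where
  "freely_reduced w \<longleftrightarrow> (\<forall>i. Suc i < length w \<longrightarrow> w ! Suc i \<noteq> inv_letter (w ! i))"

definition reduced_words :: "nat \<Rightarrow> nat \<Rightarrow> letter list set" where
  "reduced_words m l = {w. set w \<subseteq> letters m \<and> length w = l \<and> freely_reduced w}"

inductive_set pres_rel :: "nat \<Rightarrow> letter list set \<Rightarrow> (letter list \<times> letter list) set"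
  for m :: nat and R :: "letter list set" where
  refl: "set w \<subseteq> letters m \<Longrightarrow> (w, w) \<in> pres_rel m R"
| sym: "(u, v) \<in> pres_rel m R \<Longrightarrow> (v, u) \<in> pres_rel m R"
| trans: "(u, v) \<in> pres_rel m R \<Longrightarrow> (v, w) \<in> pres_rel m R \<Longrightarrow> (u, w) \<in> pres_rel m R"
| cancel: "set u \<subseteq> letters m \<Longrightarrow> set v \<subseteq> letters m \<Longrightarrow> x \<in> letters m \<Longrightarrow>
           (u @ [x, inv_letter x] @ v, u @ v) \<in> pres_rel m R"
| relator: "r \<in> R \<Longrightarrow> set r \<subseteq> letters m \<Longrightarrow> set u \<subseteq> letters m \<Longrightarrow> set v \<subseteq> letters m \<Longrightarrow>
           (u @ r @ v, u @ v) \<in> pres_rel m R"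

definition pres_group :: "nat \<Rightarrow> letter list set \<Rightarrow> letter list set monoid" where
  "pres_group m R =
     \<lparr>carrier = {w. set w \<subseteq> letters m} // pres_rel m R,
      monoid.mult = (\<lambda>A B. pres_rel m R `` {(SOME u. u \<in> A) @ (SOME v. v \<in> B)}),
      one = pres_rel m R `` {[]}\<rparr>"

definition num_relators :: "nat \<Rightarrow> (real \<Rightarrow> real) \<Rightarrow> nat \<Rightarrow> nat" where
  "num_relators m f l = nat \<lfloor>(2 * real m - 1) powr (real l * (1/2 - f (real l)))\<rfloor>"

(* distribution of the relator tuple: independent uniform choices = uniform on tuples *)
definition relator_tuples :: "nat \<Rightarrow> (real \<Rightarrow> real) \<Rightarrow> nat \<Rightarrow> letter list list pmf" where
  "relator_tuples m f l =
     pmf_of_set {rs. length rs = num_relators m f l \<and> set rs \<subseteq> reduced_words m l}"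

definition random_group_prob ::
    "nat \<Rightarrow> (real \<Rightarrow> real) \<Rightarrow> (letter list set monoid \<Rightarrow> bool) \<Rightarrow> nat \<Rightarrow> real" where
  "random_group_prob m f P l =
     measure_pmf.prob (relator_tuples m f l) {rs. P (pres_group m (set rs))}"

end

theory Submission
  imports Defs "HOL-Real_Asymp.Real_Asymp"
begin


lemma inv_letter_inv[simp]: "inv_letter (inv_letter x) = x"
  by (simp add: inv_letter_def)
lemma inv_letter_neq[simp]: "inv_letter x \<noteq> x" "x \<noteq> inv_letter x"
  by (auto simp: inv_letter_def prod_eq_iff)
lemma inv_letter_in: "x \<in> letters m \<Longrightarrow> inv_letter x \<in> letters m"
  by (auto simp: inv_letter_def letters_def)

definition invw :: "letter list \<Rightarrow> letter list" where
  "invw w = rev (map inv_letter w)"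

lemma invw_invw[simp]: "invw (invw w) = w"
  by (simp add: invw_def rev_map comp_def)
lemma set_invw: "set w \<subseteq> letters m \<Longrightarrow> set (invw w) \<subseteq> letters m"
  by (auto simp: invw_def inv_letter_in)

lemma pres_rel_sub: "(u, v) \<in> pres_rel m R \<Longrightarrow> set u \<subseteq> letters m \<and> set v \<subseteq> letters m"
  by (induction rule: pres_rel.induct) (auto simp: inv_letter_in)

lemma pres_rel_cong: "(u, v) \<in> pres_rel m R \<Longrightarrow> set a \<subseteq> letters m \<Longrightarrow> set c \<subseteq> letters m
   \<Longrightarrow> (a @ u @ c, a @ v @ c) \<in> pres_rel m R"
proof (induction rule: pres_rel.induct)
  case (refl w) then show ?case by (intro pres_rel.refl) auto
next
  case (sym u v) then show ?case by (blast intro: pres_rel.sym)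
next
  case (trans u v w) then show ?case by (blast intro: pres_rel.trans)
next
  case (cancel u v x)
  have "((a @ u) @ [x, inv_letter x] @ (v @ c), (a @ u) @ (v @ c)) \<in> pres_rel m R"
    using cancel by (intro pres_rel.cancel) auto
  then show ?case by simp
next
  case (relator r u v)
  have "((a @ u) @ r @ (v @ c), (a @ u) @ (v @ c)) \<in> pres_rel m R"
    using relator by (intro pres_rel.relator) auto
  then show ?case by simp
qed

lemma pres_rel_cong_l: "(u, v) \<in> pres_rel m R \<Longrightarrow> set a \<subseteq> letters m
   \<Longrightarrow> (a @ u, a @ v) \<in> pres_rel m R"
  using pres_rel_cong[of u v m R a "[]"] by simp
lemma pres_rel_cong_r: "(u, v) \<in> pres_rel m R \<Longrightarrow> set c \<subseteq> letters m
   \<Longrightarrow> (u @ c, v @ c) \<in> pres_rel m R"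
  using pres_rel_cong[of u v m R "[]" c] by simp

lemma cancel_pair: "x \<in> letters m \<Longrightarrow> ([x, inv_letter x], []) \<in> pres_rel m R"
  using pres_rel.cancel[of "[]" m "[]" x R] by simp

lemma inv_cancel: "set w \<subseteq> letters m \<Longrightarrow> (w @ invw w, []) \<in> pres_rel m R"
proof (induction w)
  case Nil then show ?case by (auto intro: pres_rel.refl simp: invw_def)
next
  case (Cons x w)
  have x: "x \<in> letters m" using Cons by auto
  have "([x] @ (w @ invw w) @ [inv_letter x], [x] @ [] @ [inv_letter x]) \<in> pres_rel m R"
    using Cons x by (intro pres_rel_cong) (auto simp: inv_letter_in)
  moreover have "(x # w) @ invw (x # w) = [x] @ (w @ invw w) @ [inv_letter x]"
    by (simp add: invw_def)
  ultimately show ?case using cancel_pair[OF x] by (auto intro: pres_rel.trans)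
qed

lemma inv_cancel2: "set w \<subseteq> letters m \<Longrightarrow> (invw w @ w, []) \<in> pres_rel m R"
  using inv_cancel[of "invw w" m R] set_invw[of w m] by simp

lemma key_rel:
  assumes "u @ [x] @ v \<in> R" "u @ [y] @ v \<in> R" "set (u @ [x] @ v) \<subseteq> letters m"
    "set (u @ [y] @ v) \<subseteq> letters m"
  shows "([x], [y]) \<in> pres_rel m R"
proof -
  have u: "set u \<subseteq> letters m" and v: "set v \<subseteq> letters m" using assms by auto
  have iu: "set (invw u) \<subseteq> letters m" and iv: "set (invw v) \<subseteq> letters m"
    using u v set_invw by auto
  have gen: "([z], invw u @ invw v) \<in> pres_rel m R" if z: "u @ [z] @ v \<in> R" "set (u @ [z] @ v) \<subseteq> letters m" for z
  proof -
    have z': "z \<in> letters m" using z by auto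
    have 1: "((invw u @ u) @ ([z] @ v @ invw v), [] @ ([z] @ v @ invw v)) \<in> pres_rel m R"
      using inv_cancel2[OF u] u v iv z' by (intro pres_rel_cong_r) auto
    have 2: "([z] @ (v @ invw v), [z] @ []) \<in> pres_rel m R"
      using inv_cancel[OF v] z' by (intro pres_rel_cong_l) auto
    have 3: "(invw u @ (u @ [z] @ v) @ invw v, invw u @ invw v) \<in> pres_rel m R"
      using pres_rel.relator[OF z(1) z(2) iu iv] by simp
    from 1 2 3 show ?thesis
      by (metis append_Nil append_Cons append_assoc pres_rel.trans pres_rel.sym)
  qed
  show ?thesis using gen[OF assms(1,3)] gen[OF assms(2,4)] by (blast intro: pres_rel.trans pres_rel.sym)
qed

lemma inv_rel:
  assumes "([x], [y]) \<in> pres_rel m R"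
  shows "([inv_letter x], [inv_letter y]) \<in> pres_rel m R"
proof -
  have x: "x \<in> letters m" and y: "y \<in> letters m" using pres_rel_sub[OF assms] by auto
  have 1: "([inv_letter x] @ [y, inv_letter y] @ [], [inv_letter x] @ []) \<in> pres_rel m R"
    using x y by (intro pres_rel.cancel) (auto simp: inv_letter_in)
  have 2: "([inv_letter x] @ [y] @ [inv_letter y], [inv_letter x] @ [x] @ [inv_letter y]) \<in> pres_rel m R"
    using x y by (intro pres_rel_cong pres_rel.sym[OF assms]) (auto simp: inv_letter_in)
  have 3: "([] @ [inv_letter x, inv_letter (inv_letter x)] @ [inv_letter y], [] @ [inv_letter y]) \<in> pres_rel m R"
    using x y by (intro pres_rel.cancel) (auto simp: inv_letter_in)
  from 1 2 3 show ?thesis by (auto intro: pres_rel.trans pres_rel.sym)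
qed

lemma aa_rel:
  assumes sq: "([(0, True)], [(0, False)]) \<in> pres_rel m R"
    and a0: "set [(0::nat, True)] \<subseteq> letters m"
  shows "([(0, True), (0, True)], []) \<in> pres_rel m R"
proof -
  have "([(0, True)] @ [(0, True)], [(0, True)] @ [(0, False)]) \<in> pres_rel m R"
    using sq a0 by (intro pres_rel_cong_l) auto
  moreover have "([(0, True), inv_letter (0, True)], []) \<in> pres_rel m R"
    using cancel_pair a0 by simp
  ultimately show ?thesis by (auto simp: inv_letter_def intro: pres_rel.trans)
qed

lemma collapse_words:
  assumes gen: "\<And>i. i < m \<Longrightarrow> ([(i, True)], [(0, True)]) \<in> pres_rel m R"
    and sq: "([(0, True)], [(0, False)]) \<in> pres_rel m R"
    and w: "set w \<subseteq> letters m"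
  shows "(w, []) \<in> pres_rel m R \<or> (w, [(0, True)]) \<in> pres_rel m R"
  using w
proof (induction w)
  case Nil then show ?case by (auto intro: pres_rel.refl)
next
  case (Cons x w)
  have x: "x \<in> letters m" and ws: "set w \<subseteq> letters m" using Cons by auto
  obtain i b where xi: "x = (i, b)" "i < m" using x by (auto simp: letters_def)
  have a0: "(0, True) \<in> letters m" using xi by (auto simp: letters_def)
  have lx: "([x], [(0, True)]) \<in> pres_rel m R"
  proof (cases b)
    case True then show ?thesis using gen xi by simp
  next
    case False
    have "([inv_letter (i, True)], [inv_letter (0, True)]) \<in> pres_rel m R"
      by (rule inv_rel[OF gen[OF xi(2)]])
    then have "([x], [(0, False)]) \<in> pres_rel m R" using False xi by (simp add: inv_letter_def)
    then show ?thesis using sq by (blast intro: pres_rel.trans pres_rel.sym)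
  qed
  have s1: "([x] @ w, [(0, True)] @ w) \<in> pres_rel m R"
    using lx ws by (rule pres_rel_cong_r)
  have aa: "([(0, True), (0, True)], []) \<in> pres_rel m R"
  proof -
    have "([(0, True)] @ [(0, True)], [(0, True)] @ [(0, False)]) \<in> pres_rel m R"
      using sq a0 by (intro pres_rel_cong_l) auto
    moreover have "([(0, True), inv_letter (0, True)], []) \<in> pres_rel m R"
      using cancel_pair[OF a0] .
    ultimately show ?thesis by (auto simp: inv_letter_def intro: pres_rel.trans)
  qed
  from Cons.IH[OF ws] show ?case
  proof
    assume "(w, []) \<in> pres_rel m R"
    then have "([(0, True)] @ w, [(0, True)] @ []) \<in> pres_rel m R" using a0 by (intro pres_rel_cong_l) auto
    then show ?thesis using s1 by (auto intro: pres_rel.trans)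
  next
    assume "(w, [(0, True)]) \<in> pres_rel m R"
    then have "([(0, True)] @ w, [(0, True)] @ [(0, True)]) \<in> pres_rel m R" using a0 by (intro pres_rel_cong_l) auto
    then show ?thesis using s1 aa by (auto intro: pres_rel.trans)
  qed
qed

lemma equiv_pres: "equiv {w. set w \<subseteq> letters m} (pres_rel m R)"
proof -
  have "pres_rel m R \<subseteq> {w. set w \<subseteq> letters m} \<times> {w. set w \<subseteq> letters m}"
    using pres_rel_sub by fast
  then show ?thesis
  unfolding equiv_def refl_on_def sym_def trans_def
  by (auto intro: pres_rel.refl pres_rel.sym pres_rel.trans)
qed

lemma pres_mult:
  assumes "set a \<subseteq> letters m" "set b \<subseteq> letters m"
  shows "monoid.mult (pres_group m R) (pres_rel m R `` {a}) (pres_rel m R `` {b}) = pres_rel m R `` {a @ b}"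
proof -
  let ?E = "pres_rel m R"
  have ea: "a \<in> ?E `` {a}" and eb: "b \<in> ?E `` {b}" using assms by (auto intro: pres_rel.refl)
  define u where "u = (SOME u. u \<in> ?E `` {a})"
  define v where "v = (SOME v. v \<in> ?E `` {b})"
  have "u \<in> ?E `` {a}" unfolding u_def using ea by (rule someI)
  then have u: "(a, u) \<in> ?E" by simp
  have "v \<in> ?E `` {b}" unfolding v_def using eb by (rule someI)
  then have v: "(b, v) \<in> ?E" by simp
  have "(a @ b, u @ b) \<in> ?E" using u assms by (intro pres_rel_cong_r) auto
  moreover have "(u @ b, u @ v) \<in> ?E" using v pres_rel_sub[OF u] by (intro pres_rel_cong_l) auto
  ultimately have "(a @ b, u @ v) \<in> ?E" by (rule pres_rel.trans)
  then have "?E `` {u @ v} = ?E `` {a @ b}"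
    by (intro equiv_class_eq[OF equiv_pres]) (rule pres_rel.sym)
  then show ?thesis by (simp add: pres_group_def u_def v_def)
qed

lemma group_collapse:
  assumes m: "m \<ge> 2"
    and gen: "\<And>i. i < m \<Longrightarrow> ([(i, True)], [(0, True)]) \<in> pres_rel m R"
    and sq: "([(0, True)], [(0, False)]) \<in> pres_rel m R"
  shows "pres_group m R \<cong> singleton_group (undefined::int) \<or> pres_group m R \<cong> integer_mod_group 2"
proof -
  let ?E = "pres_rel m R"
  let ?G = "pres_group m R"
  define c0 where "c0 = ?E `` {[]}"
  define c1 where "c1 = ?E `` {[(0, True)]}"
  have a0: "set [(0::nat, True)] \<subseteq> letters m" using m by (auto simp: letters_def)
  have car: "carrier ?G = {c0, c1}"
  proof
    show "carrier ?G \<subseteq> {c0, c1}"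
    proof
      fix X assume "X \<in> carrier ?G"
      then obtain w where w: "set w \<subseteq> letters m" "X = ?E `` {w}"
        by (auto simp: pres_group_def quotient_def)
      from collapse_words[OF gen sq w(1)] show "X \<in> {c0, c1}"
        using w(2) equiv_class_eq[OF equiv_pres] unfolding c0_def c1_def by blast
    qed
    show "{c0, c1} \<subseteq> carrier ?G"
      using a0 unfolding c0_def c1_def pres_group_def by (auto intro: quotientI)
  qed
  have m00: "monoid.mult ?G c0 c0 = c0" and m01: "monoid.mult ?G c0 c1 = c1"
    and m10: "monoid.mult ?G c1 c0 = c1" and m11: "monoid.mult ?G c1 c1 = c0"
  proof -
    have aa: "([(0, True), (0, True)], []) \<in> ?E"
      by (rule aa_rel[OF sq a0])
    show "monoid.mult ?G c0 c0 = c0" "monoid.mult ?G c0 c1 = c1" "monoid.mult ?G c1 c0 = c1"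
      unfolding c0_def c1_def using pres_mult[of "[]" m "[]" R] pres_mult[of "[]" m "[(0,True)]" R]
        pres_mult[of "[(0,True)]" m "[]" R] a0 by auto
    have "monoid.mult ?G c1 c1 = ?E `` {[(0, True), (0, True)]}"
      unfolding c1_def using pres_mult[of "[(0,True)]" m "[(0,True)]" R] a0 by auto
    also have "\<dots> = c0" unfolding c0_def using aa by (intro equiv_class_eq[OF equiv_pres])
    finally show "monoid.mult ?G c1 c1 = c0" .
  qed
  show ?thesis
  proof (cases "c0 = c1")
    case True
    have "(\<lambda>_. undefined) \<in> iso ?G (singleton_group (undefined::int))"
      unfolding iso_def hom_def bij_betw_def using car True
      by (auto simp: singleton_group_def inj_on_def)
    then show ?thesis by (auto intro: is_isoI)
  next
    case False
    define h where "h X = (if X = c0 then 0 else 1::int)" for X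
    have "h \<in> iso ?G (integer_mod_group 2)"
      unfolding iso_def hom_def bij_betw_def using car False m00 m01 m10 m11
      by (auto simp: h_def inj_on_def carrier_integer_mod_group mult_integer_mod_group image_def)
    then show ?thesis by (auto intro: is_isoI)
  qed
qed


definition Tup :: "'a set \<Rightarrow> nat \<Rightarrow> 'a list set" where
  "Tup W k = {xs. set xs \<subseteq> W \<and> length xs = k}"

lemma Tup_Suc: "Tup W (Suc k) = (\<lambda>(xs, u). u # xs) ` (Tup W k \<times> W)"
  unfolding Tup_def by (rule lists_length_Suc_eq)

lemma Tup_0: "Tup W 0 = {[]}" by (auto simp: Tup_def)

lemma finite_Tup: "finite W \<Longrightarrow> finite (Tup W k)"
  unfolding Tup_def by (rule finite_lists_length_eq)

lemma card_Tup: "finite W \<Longrightarrow> card (Tup W k) = card W ^ k"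
  unfolding Tup_def by (rule card_lists_length_eq)

lemma sum_Tup_Suc:
  assumes "finite W"
  shows "(\<Sum>A\<in>Tup W (Suc k). F A) = (\<Sum>u\<in>W. \<Sum>A\<in>Tup W k. F (u # A))"
proof -
  have inj: "inj_on (\<lambda>(xs, u). u # xs) (Tup W k \<times> W)" by (auto simp: inj_on_def)
  have "(\<Sum>A\<in>Tup W (Suc k). F A) = (\<Sum>p\<in>Tup W k \<times> W. F ((\<lambda>(xs, u). u # xs) p))"
    unfolding Tup_Suc using sum.reindex[OF inj, of F] by (simp add: comp_def)
  also have "\<dots> = (\<Sum>A\<in>Tup W k. \<Sum>u\<in>W. F (u # A))"
    by (simp add: sum.cartesian_product case_prod_unfold)
  also have "\<dots> = (\<Sum>u\<in>W. \<Sum>A\<in>Tup W k. F (u # A))"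
    by (rule sum.swap)
  finally show ?thesis .
qed

lemma sum_list_minus_const: "(\<Sum>u\<leftarrow>A. f u - (c::real)) = (\<Sum>u\<leftarrow>A. f u) - real (length A) * c"
  by (induction A) (auto simp: algebra_simps)

lemma sum_Tup_lin:
  assumes "finite W"
  shows "real (card W) * (\<Sum>A\<in>Tup W k. (\<Sum>u\<leftarrow>A. g u)) = real k * real (card W) ^ k * (\<Sum>w\<in>W. (g w :: real))"
proof (induction k)
  case 0 then show ?case by (simp add: Tup_0)
next
  case (Suc k)
  have "(\<Sum>A\<in>Tup W (Suc k). (\<Sum>u\<leftarrow>A. g u)) = (\<Sum>u\<in>W. \<Sum>A\<in>Tup W k. g u + (\<Sum>v\<leftarrow>A. g v))"
    unfolding sum_Tup_Suc[OF assms] by simp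
  also have "\<dots> = (\<Sum>u\<in>W. real (card W) ^ k * g u + (\<Sum>A\<in>Tup W k. (\<Sum>v\<leftarrow>A. g v)))"
    by (simp add: sum.distrib card_Tup[OF assms])
  also have "\<dots> = real (card W) ^ k * (\<Sum>u\<in>W. g u) + real (card W) * (\<Sum>A\<in>Tup W k. (\<Sum>v\<leftarrow>A. g v))"
    by (simp add: sum.distrib sum_distrib_left)
  finally have "real (card W) * (\<Sum>A\<in>Tup W (Suc k). (\<Sum>u\<leftarrow>A. g u)) =
     real (card W) ^ Suc k * (\<Sum>u\<in>W. g u) + real (card W) * (real k * real (card W) ^ k * (\<Sum>w\<in>W. g w))"
    using Suc by (simp add: algebra_simps)
  then show ?case by (simp add: algebra_simps)
qed

lemma sum_Tup_sq:
  assumes "finite W" "(\<Sum>w\<in>W. g w) = (0::real)"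
  shows "real (card W) * (\<Sum>A\<in>Tup W k. (\<Sum>u\<leftarrow>A. g u)^2) = real k * real (card W) ^ k * (\<Sum>w\<in>W. (g w)^2)"
proof (induction k)
  case 0 then show ?case by (simp add: Tup_0)
next
  case (Suc k)
  let ?S = "\<lambda>A. (\<Sum>v\<leftarrow>A. g v)"
  have "(\<Sum>A\<in>Tup W (Suc k). (?S A)^2) = (\<Sum>u\<in>W. \<Sum>A\<in>Tup W k. (g u + ?S A)^2)"
    unfolding sum_Tup_Suc[OF assms(1)] by simp
  also have "\<dots> = (\<Sum>u\<in>W. \<Sum>A\<in>Tup W k. (g u)^2 + 2 * g u * ?S A + (?S A)^2)"
    by (simp add: power2_sum algebra_simps)
  also have "\<dots> = (\<Sum>u\<in>W. real (card W) ^ k * (g u)^2 + 2 * g u * (\<Sum>A\<in>Tup W k. ?S A) + (\<Sum>A\<in>Tup W k. (?S A)^2))"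
    by (simp add: sum.distrib card_Tup[OF assms(1)] sum_distrib_left)
  also have "\<dots> = real (card W) ^ k * (\<Sum>u\<in>W. (g u)^2) + 2 * (\<Sum>u\<in>W. g u) * (\<Sum>A\<in>Tup W k. ?S A) + real (card W) * (\<Sum>A\<in>Tup W k. (?S A)^2)"
    by (simp add: sum.distrib sum_distrib_left sum_distrib_right mult.assoc sum.swap[of _ W])
  also have "\<dots> = real (card W) ^ k * (\<Sum>u\<in>W. (g u)^2) + real (card W) * (\<Sum>A\<in>Tup W k. (?S A)^2)"
    using assms(2) by simp
  finally have "real (card W) * (\<Sum>A\<in>Tup W (Suc k). (?S A)^2) =
     real (card W) ^ Suc k * (\<Sum>u\<in>W. (g u)^2) + real (card W) * (real k * real (card W) ^ k * (\<Sum>w\<in>W. (g w)^2))"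
    using Suc by (simp add: algebra_simps)
  then show ?case by (simp add: algebra_simps)
qed

fun Cf :: "('a \<Rightarrow> 'a \<Rightarrow> real) \<Rightarrow> 'a list \<Rightarrow> real" where
  "Cf d [] = 0"
| "Cf d (u # A) = Cf d A + (\<Sum>v\<leftarrow>A. d u v)"

lemma Cf_nonneg: "(\<And>u v. d u v \<ge> 0) \<Longrightarrow> Cf d A \<ge> 0"
  by (induction A) (auto intro!: add_nonneg_nonneg sum_list_nonneg)

lemma sum_Tup_C:
  assumes "finite W" "\<And>u. u \<in> W \<Longrightarrow> (\<Sum>w\<in>W. d u w) \<le> D" "D \<ge> 0"
  shows "real (card W) * (\<Sum>A\<in>Tup W k. Cf d A) \<le> real k ^ 2 * real (card W) ^ k * D"
proof (induction k)
  case 0 then show ?case by (simp add: Tup_0)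
next
  case (Suc k)
  let ?n = "real (card W)"
  have "(\<Sum>A\<in>Tup W (Suc k). Cf d A) = (\<Sum>u\<in>W. \<Sum>A\<in>Tup W k. Cf d A + (\<Sum>v\<leftarrow>A. d u v))"
    unfolding sum_Tup_Suc[OF assms(1)] by simp
  also have "\<dots> = ?n * (\<Sum>A\<in>Tup W k. Cf d A) + (\<Sum>u\<in>W. \<Sum>A\<in>Tup W k. (\<Sum>v\<leftarrow>A. d u v))"
    by (simp add: sum.distrib)
  finally have eq: "?n * (\<Sum>A\<in>Tup W (Suc k). Cf d A) = ?n * (?n * (\<Sum>A\<in>Tup W k. Cf d A)) + (\<Sum>u\<in>W. ?n * (\<Sum>A\<in>Tup W k. (\<Sum>v\<leftarrow>A. d u v)))"
    by (simp add: algebra_simps sum_distrib_left)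
  have "(\<Sum>u\<in>W. ?n * (\<Sum>A\<in>Tup W k. (\<Sum>v\<leftarrow>A. d u v))) = (\<Sum>u\<in>W. real k * ?n ^ k * (\<Sum>w\<in>W. d u w))"
    using sum_Tup_lin[OF assms(1)] by simp
  also have "\<dots> \<le> (\<Sum>u\<in>W. real k * ?n ^ k * D)"
    by (intro sum_mono mult_left_mono assms(2)) auto
  also have "\<dots> = ?n * (real k * ?n ^ k * D)" by simp
  finally have 1: "(\<Sum>u\<in>W. ?n * (\<Sum>A\<in>Tup W k. (\<Sum>v\<leftarrow>A. d u v))) \<le> ?n * (real k * ?n ^ k * D)" .
  have 2: "?n * (?n * (\<Sum>A\<in>Tup W k. Cf d A)) \<le> ?n * (real k ^ 2 * ?n ^ k * D)"
    using Suc by (intro mult_left_mono) auto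
  have "?n * (\<Sum>A\<in>Tup W (Suc k). Cf d A) \<le> ?n * (real k ^ 2 * ?n ^ k * D) + ?n * (real k * ?n ^ k * D)"
    using eq 1 2 by linarith
  also have "\<dots> = (real k ^ 2 + real k) * ?n ^ Suc k * D" by (simp add: algebra_simps)
  also have "\<dots> \<le> real (Suc k) ^ 2 * ?n ^ Suc k * D"
    using assms(3) by (intro mult_right_mono) (auto simp: power2_eq_square algebra_simps)
  finally show ?case .
qed

lemma markov_count:
  assumes "finite S" "\<And>x. x \<in> S \<Longrightarrow> F x \<ge> (0::real)"
  shows "real (card {x\<in>S. F x \<ge> \<theta>}) * \<theta> \<le> (\<Sum>x\<in>S. F x)"
proof -
  have "real (card {x\<in>S. F x \<ge> \<theta>}) * \<theta> = (\<Sum>x\<in>{x\<in>S. F x \<ge> \<theta>}. \<theta>)" by simp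
  also have "\<dots> \<le> (\<Sum>x\<in>{x\<in>S. F x \<ge> \<theta>}. F x)" by (intro sum_mono) auto
  also have "\<dots> \<le> (\<Sum>x\<in>S. F x)" using assms by (intro sum_mono2) auto
  finally show ?thesis .
qed

lemma sum_card_swap:
  assumes "finite A" "finite B"
  shows "(\<Sum>a\<in>A. card {b\<in>B. P a b}) = (\<Sum>b\<in>B. card {a\<in>A. P a b})"
proof -
  have "(\<Sum>a\<in>A. card {b\<in>B. P a b}) = (\<Sum>a\<in>A. \<Sum>b\<in>B. if P a b then 1 else 0)"
    using assms by (simp add: sum.inter_filter[symmetric])
  also have "\<dots> = (\<Sum>b\<in>B. \<Sum>a\<in>A. if P a b then 1 else 0)" by (rule sum.swap)
  also have "\<dots> = (\<Sum>b\<in>B. card {a\<in>A. P a b})"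
    using assms by (simp add: sum.inter_filter[symmetric])
  finally show ?thesis .
qed


lemma lin_aux: "(M::real)/2 \<le> T \<Longrightarrow> C < M/4 \<Longrightarrow> T \<le> S + C \<Longrightarrow> M/4 \<le> S" by linarith

lemma lin_aux2: "T < M/2 \<Longrightarrow> M/2 \<le> M - (T::real)" by linarith

lemma cheb_aux: "c1 \<le> c2 \<Longrightarrow> c2 * q \<le> S \<Longrightarrow> n * S = V \<Longrightarrow> V \<le> U \<Longrightarrow> q \<ge> 0 \<Longrightarrow> n > 0
   \<Longrightarrow> c1 * (q * n) \<le> (U::real)"
proof -
  assume h: "c1 \<le> c2" "c2 * q \<le> S" "n * S = V" "V \<le> U" "q \<ge> 0" "n > 0"
  have "c1 * q \<le> S" using mult_right_mono[OF h(1) h(5)] h(2) by linarith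
  then have "c1 * q * n \<le> S * n" using h(6) by (intro mult_right_mono) auto
  moreover have "c1 * (q * n) = c1 * q * n" "S * n = n * S" by (simp_all add: ac_simps)
  ultimately show ?thesis using h by linarith
qed

lemma markov_aux: "c * q \<le> S \<Longrightarrow> n * S \<le> U \<Longrightarrow> q \<ge> 0 \<Longrightarrow> n > 0 \<Longrightarrow> c * (q * n) \<le> (U::real)"
  using cheb_aux[of c c q S n "n * S" U] by simp

locale hit =
  fixes W :: "'a set" and X :: "'a \<Rightarrow> 'a set" and K :: real
  assumes finW: "finite W" and neW: "W \<noteq> {}"
    and XW: "\<And>w. w \<in> W \<Longrightarrow> X w \<subseteq> W"
    and Xcard: "\<And>w. w \<in> W \<Longrightarrow> real (card (X w)) \<le> K"
    and Xinv: "\<And>v. v \<in> W \<Longrightarrow> real (card {w\<in>W. v \<in> X w}) \<le> K"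
begin

definition "nn = real (card W)"
definition "sig = (\<Sum>w\<in>W. real (card (X w)))"
definition "tt w = real (card (X w))"
definition "SS A = \<Union> (X ` set A)"
definition "TT A = (\<Sum>u\<leftarrow>A. tt u)"
definition "dd u v = real (card (X u \<inter> X v))"

lemma K_nonneg: "K \<ge> 0"
  using neW Xcard by (meson all_not_in_conv of_nat_0_le_iff order_trans)

lemma nn_pos: "nn > 0" using finW neW by (simp add: nn_def card_gt_0_iff)

lemma finX: "w \<in> W \<Longrightarrow> finite (X w)" using XW finW finite_subset by blast

lemma SS_sub: "set A \<subseteq> W \<Longrightarrow> SS A \<subseteq> W" using XW by (auto simp: SS_def)

lemma inter_bound: "set A \<subseteq> W \<Longrightarrow> u \<in> W \<Longrightarrow> real (card (X u \<inter> SS A)) \<le> (\<Sum>v\<leftarrow>A. dd u v)"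
proof (induction A)
  case Nil then show ?case by (simp add: SS_def)
next
  case (Cons v A)
  have "X u \<inter> SS (v # A) = (X u \<inter> X v) \<union> (X u \<inter> SS A)" by (auto simp: SS_def)
  then have "card (X u \<inter> SS (v # A)) \<le> card (X u \<inter> X v) + card (X u \<inter> SS A)"
    by (simp add: card_Un_le)
  then show ?case using Cons by (simp add: dd_def)
qed

lemma union_bound: "set A \<subseteq> W \<Longrightarrow> TT A \<le> real (card (SS A)) + Cf dd A"
proof (induction A)
  case Nil then show ?case by (simp add: TT_def SS_def)
next
  case (Cons u A)
  have u: "u \<in> W" and A: "set A \<subseteq> W" using Cons by auto
  have fin: "finite (X u)" "finite (SS A)" using finX[OF u] SS_sub[OF A] finW finite_subset by auto
  have "SS (u # A) = X u \<union> SS A" by (simp add: SS_def)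
  then have "card (X u) + card (SS A) = card (SS (u # A)) + card (X u \<inter> SS A)"
    using card_Un_Int[OF fin] by simp
  then have "real (card (X u)) + real (card (SS A)) = real (card (SS (u # A))) + real (card (X u \<inter> SS A))"
    by (metis of_nat_add)
  moreover have "real (card (X u \<inter> SS A)) \<le> (\<Sum>v\<leftarrow>A. dd u v)" using inter_bound[OF A u] .
  moreover have "TT A \<le> real (card (SS A)) + Cf dd A" using Cons A by auto
  ultimately show ?case by (simp add: TT_def tt_def)
qed

lemma dd_sum: "u \<in> W \<Longrightarrow> (\<Sum>w\<in>W. dd u w) \<le> K^2"
proof -
  assume u: "u \<in> W"
  have "(\<Sum>w\<in>W. card (X u \<inter> X w)) = (\<Sum>w\<in>W. card {v\<in>X u. v \<in> X w})"
    by (intro sum.cong) (auto intro!: arg_cong[where f=card])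
  also have "\<dots> = (\<Sum>v\<in>X u. card {w\<in>W. v \<in> X w})"
    by (rule sum_card_swap[OF finW finX[OF u]])
  finally have "(\<Sum>w\<in>W. dd u w) = (\<Sum>v\<in>X u. real (card {w\<in>W. v \<in> X w}))"
    unfolding dd_def by (metis (no_types, lifting) of_nat_sum sum.cong)
  also have "\<dots> \<le> (\<Sum>v\<in>X u. K)" using Xinv XW[OF u] by (intro sum_mono) auto
  also have "\<dots> = real (card (X u)) * K" by simp
  also have "\<dots> \<le> K * K" using Xcard[OF u] K_nonneg by (intro mult_right_mono) auto
  finally show ?thesis by (simp add: power2_eq_square)
qed

lemma dd_nonneg: "dd u v \<ge> 0" by (simp add: dd_def)

lemma var_bound: "(\<Sum>w\<in>W. (tt w - sig / nn)^2) \<le> K * sig"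
proof -
  have "(\<Sum>w\<in>W. (tt w - sig / nn)^2) = (\<Sum>w\<in>W. (tt w)^2) - 2 * (sig/nn) * (\<Sum>w\<in>W. tt w) + nn * (sig/nn)^2"
    by (simp add: power2_diff sum.distrib sum_subtractf sum_distrib_left nn_def algebra_simps sum_divide_distrib)
  also have "\<dots> = (\<Sum>w\<in>W. (tt w)^2) - sig^2 / nn"
    using nn_pos by (simp add: sig_def tt_def power2_eq_square field_simps)
  also have "\<dots> \<le> (\<Sum>w\<in>W. (tt w)^2)" using nn_pos by simp
  also have "\<dots> \<le> (\<Sum>w\<in>W. K * tt w)"
    using Xcard by (intro sum_mono) (auto simp: power2_eq_square tt_def intro: mult_right_mono)
  also have "\<dots> = K * sig" by (simp add: sig_def tt_def sum_distrib_left)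
  finally show ?thesis .
qed

lemma miss_bound:
  assumes a: "a \<ge> 1" and sp: "sig > 0"
  shows "real (card {rs \<in> Tup W (a + b). \<not> (\<exists>u\<in>set (take a rs). \<exists>v\<in>set (drop a rs). v \<in> X u)})
     \<le> nn ^ (a + b) * (exp (- (real a * real b * sig / (4 * nn^2))) + 4 * K * nn / (real a * sig)
          + 4 * real a * K^2 / sig)"
proof -
  let ?mu = "sig / nn"
  let ?E = "\<lambda>rs. \<not> (\<exists>u\<in>set (take a rs). \<exists>v\<in>set (drop a rs). v \<in> X u)"
  let ?B = "\<lambda>A. {B. set B \<subseteq> W - SS A \<and> length B = b}"
  have mu: "?mu > 0" using sp nn_pos by simp
  have setq: "{rs \<in> Tup W (a + b). ?E rs} = (\<lambda>(A, B). A @ B) ` (SIGMA A:Tup W a. ?B A)"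
  proof (intro equalityI subsetI)
    fix rs assume "rs \<in> {rs \<in> Tup W (a + b). ?E rs}"
    then have rs: "set rs \<subseteq> W" "length rs = a + b" "?E rs" by (auto simp: Tup_def)
    have "take a rs \<in> Tup W a" using rs set_take_subset[of a rs] by (auto simp: Tup_def)
    moreover have "drop a rs \<in> ?B (take a rs)"
      using rs set_drop_subset[of a rs] by (auto simp: SS_def)
    ultimately show "rs \<in> (\<lambda>(A, B). A @ B) ` (SIGMA A:Tup W a. ?B A)"
      by (intro image_eqI[of _ _ "(take a rs, drop a rs)"]) auto
  next
    fix rs assume "rs \<in> (\<lambda>(A, B). A @ B) ` (SIGMA A:Tup W a. ?B A)"
    then obtain A B where AB: "rs = A @ B" "A \<in> Tup W a" "B \<in> ?B A" by auto
    then show "rs \<in> {rs \<in> Tup W (a + b). ?E rs}" by (auto simp: Tup_def SS_def)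
  qed
  have inj: "inj_on (\<lambda>(A, B). A @ B) (SIGMA A:Tup W a. ?B A)"
    by (auto simp: inj_on_def Tup_def)
  have finB: "finite (?B A)" for A
    using finW by (intro finite_lists_length_eq) auto
  have "card {rs \<in> Tup W (a + b). ?E rs} = card (SIGMA A:Tup W a. ?B A)"
    unfolding setq by (rule card_image[OF inj])
  also have "\<dots> = (\<Sum>A\<in>Tup W a. card (?B A))"
    using finite_Tup[OF finW] finB by (intro card_SigmaI) auto
  also have "\<dots> = (\<Sum>A\<in>Tup W a. card (W - SS A) ^ b)"
    using finW by (intro sum.cong refl card_lists_length_eq) auto
  finally have cnt: "real (card {rs \<in> Tup W (a + b). ?E rs}) = (\<Sum>A\<in>Tup W a. real (card (W - SS A)) ^ b)"
    by simp
  define ex where "ex = exp (- (real a * real b * sig / (4 * nn^2)))"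
  define Bad where "Bad = {A \<in> Tup W a. TT A < real a * ?mu / 2} \<union> {A \<in> Tup W a. Cf dd A \<ge> real a * ?mu / 4}"
  have each: "real (card (W - SS A)) ^ b \<le> nn ^ b * ex + (if A \<in> Bad then nn ^ b else 0)"
    if A: "A \<in> Tup W a" for A
  proof -
    have As: "set A \<subseteq> W" using A by (auto simp: Tup_def)
    have cW: "real (card (W - SS A)) = nn - real (card (SS A))"
      using SS_sub[OF As] finW by (simp add: card_Diff_subset finite_subset nn_def of_nat_diff card_mono)
    have le: "real (card (W - SS A)) \<le> nn" using finW by (simp add: nn_def card_mono)
    show ?thesis
    proof (cases "A \<in> Bad")
      case True
      have "real (card (W - SS A)) ^ b \<le> nn ^ b" using le by (intro power_mono) auto
      moreover have "nn ^ b * ex \<ge> 0" using nn_pos by (simp add: ex_def)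
      ultimately show ?thesis using True by simp
    next
      case False
      then have "TT A \<ge> real a * ?mu / 2" "Cf dd A < real a * ?mu / 4" using A by (auto simp: Bad_def)
      then have big: "real (card (SS A)) \<ge> real a * ?mu / 4" using union_bound[OF As] lin_aux by blast
      have e1: "nn * (1 - real a * ?mu / (4 * nn)) = nn - real a * ?mu / 4"
        using nn_pos by (simp add: field_simps)
      have "real (card (W - SS A)) \<le> nn * (1 - real a * ?mu / (4 * nn))"
        unfolding e1 using cW big by linarith
      also have "\<dots> \<le> nn * exp (- (real a * ?mu / (4 * nn)))"
        using nn_pos by (intro mult_left_mono exp_minus_ge) auto
      finally have "real (card (W - SS A)) ^ b \<le> (nn * exp (- (real a * ?mu / (4 * nn)))) ^ b"
        by (intro power_mono) auto
      also have "\<dots> = nn ^ b * ex"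
        using nn_pos by (simp add: ex_def power_mult_distrib exp_of_nat_mult[symmetric] power2_eq_square field_simps)
      finally show ?thesis using False by simp
    qed
  qed
  have "(\<Sum>A\<in>Tup W a. real (card (W - SS A)) ^ b) \<le> (\<Sum>A\<in>Tup W a. nn ^ b * ex + (if A \<in> Bad then nn ^ b else 0))"
    using each by (intro sum_mono) auto
  also have "\<dots> = nn ^ a * (nn ^ b * ex) + nn ^ b * real (card Bad)"
  proof -
    have "Bad \<subseteq> Tup W a" by (auto simp: Bad_def)
    then have "(\<Sum>A\<in>Tup W a. (if A \<in> Bad then nn ^ b else 0)) = nn ^ b * real (card Bad)"
      using finite_Tup[OF finW] by (simp add: sum.If_cases Int_absorb1)
    then show ?thesis using card_Tup[OF finW] by (simp add: sum.distrib nn_def)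
  qed
  finally have main: "real (card {rs \<in> Tup W (a + b). ?E rs}) \<le> nn ^ a * (nn ^ b * ex) + nn ^ b * real (card Bad)"
    using cnt by simp
  have cheb: "real (card {A \<in> Tup W a. TT A < real a * ?mu / 2}) \<le> 4 * K * nn ^ (a+1) / (real a * sig)"
  proof -
    let ?F = "\<lambda>A. (TT A - real a * ?mu)^2"
    have sub: "{A \<in> Tup W a. TT A < real a * ?mu / 2} \<subseteq> {A \<in> Tup W a. ?F A \<ge> (real a * ?mu / 2)^2}"
    proof (intro subsetI)
      fix A assume "A \<in> {A \<in> Tup W a. TT A < real a * ?mu / 2}"
      then have A: "A \<in> Tup W a" "TT A < real a * ?mu / 2" by auto
      moreover have "TT A \<ge> 0" unfolding TT_def tt_def by (rule sum_list_nonneg) auto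
      note A
      ultimately have h: "real a * ?mu / 2 \<le> real a * ?mu - TT A" "0 \<le> real a * ?mu / 2"
        using mu lin_aux2[of "TT A" "real a * ?mu"] sp nn_pos by auto
      have "(real a * ?mu / 2)^2 \<le> (real a * ?mu - TT A)^2" using power_mono[OF h, of 2] .
      then show "A \<in> {A \<in> Tup W a. ?F A \<ge> (real a * ?mu / 2)^2}"
        using A by (simp add: power2_commute)
    qed
    have "real (card {A \<in> Tup W a. TT A < real a * ?mu / 2}) \<le> real (card {A \<in> Tup W a. ?F A \<ge> (real a * ?mu / 2)^2})"
      using finite_Tup[OF finW] sub by (simp add: card_mono)
    moreover have "real (card {A \<in> Tup W a. ?F A \<ge> (real a * ?mu / 2)^2}) * (real a * ?mu / 2)^2 \<le> (\<Sum>A\<in>Tup W a. ?F A)"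
      using finite_Tup[OF finW] by (intro markov_count) auto
    moreover have "nn * (\<Sum>A\<in>Tup W a. ?F A) = real a * nn ^ a * (\<Sum>w\<in>W. (tt w - ?mu)^2)"
    proof -
      have "?F A = (\<Sum>u\<leftarrow>A. tt u - ?mu)^2" if "A \<in> Tup W a" for A
        using that by (simp add: sum_list_minus_const TT_def Tup_def)
      then have "(\<Sum>A\<in>Tup W a. ?F A) = (\<Sum>A\<in>Tup W a. (\<Sum>u\<leftarrow>A. tt u - ?mu)^2)" by (intro sum.cong) auto
      moreover have "(\<Sum>w\<in>W. tt w - ?mu) = 0"
        using nn_pos by (simp add: sum_subtractf sig_def tt_def nn_def)
      ultimately show ?thesis using sum_Tup_sq[OF finW, of "\<lambda>w. tt w - ?mu" a] by (simp add: nn_def)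
    qed
    moreover have "real a * nn ^ a * (\<Sum>w\<in>W. (tt w - ?mu)^2) \<le> real a * nn ^ a * (K * sig)"
      using var_bound nn_pos by (intro mult_left_mono) auto
    ultimately have "real (card {A \<in> Tup W a. TT A < real a * ?mu / 2}) * ((real a * ?mu / 2)^2 * nn) \<le> real a * nn ^ a * (K * sig)"
      by (rule cheb_aux) (simp_all add: nn_pos)
    moreover have "(real a * ?mu / 2)^2 * nn > 0" using mu nn_pos a sp by (intro mult_pos_pos zero_less_power divide_pos_pos) auto
    ultimately have "real (card {A \<in> Tup W a. TT A < real a * ?mu / 2}) \<le> real a * nn ^ a * (K * sig) / ((real a * ?mu / 2)^2 * nn)"
      by (subst pos_le_divide_eq) auto
    also have "\<dots> = 4 * K * nn ^ (a+1) / (real a * sig)"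
      using nn_pos sp a by (simp add: field_simps power2_eq_square)
    finally show ?thesis .
  qed
  have markov: "real (card {A \<in> Tup W a. Cf dd A \<ge> real a * ?mu / 4}) \<le> 4 * real a * K^2 * nn ^ a / sig"
  proof -
    have "real (card {A \<in> Tup W a. Cf dd A \<ge> real a * ?mu / 4}) * (real a * ?mu / 4) \<le> (\<Sum>A\<in>Tup W a. Cf dd A)"
      using finite_Tup[OF finW] Cf_nonneg[of dd] dd_nonneg by (intro markov_count) auto
    moreover have "nn * (\<Sum>A\<in>Tup W a. Cf dd A) \<le> real a ^ 2 * nn ^ a * K^2"
      using sum_Tup_C[OF finW dd_sum] by (simp add: nn_def)
    ultimately have "real (card {A \<in> Tup W a. Cf dd A \<ge> real a * ?mu / 4}) * ((real a * ?mu / 4) * nn) \<le> real a ^ 2 * nn ^ a * K^2"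
      by (rule markov_aux) (use mu nn_pos sp in auto)
    moreover have "(real a * ?mu / 4) * nn > 0" using mu nn_pos a sp by (intro mult_pos_pos divide_pos_pos) auto
    ultimately have "real (card {A \<in> Tup W a. Cf dd A \<ge> real a * ?mu / 4}) \<le> real a ^ 2 * nn ^ a * K^2 / ((real a * ?mu / 4) * nn)"
      by (subst pos_le_divide_eq) auto
    also have "\<dots> = 4 * real a * K^2 * nn ^ a / sig"
      using nn_pos sp a by (simp add: field_simps power2_eq_square)
    finally show ?thesis .
  qed
  have "card Bad \<le> card {A \<in> Tup W a. TT A < real a * ?mu / 2} + card {A \<in> Tup W a. Cf dd A \<ge> real a * ?mu / 4}"
    unfolding Bad_def by (rule card_Un_le)
  then have cB: "real (card Bad) \<le> real (card {A \<in> Tup W a. TT A < real a * ?mu / 2}) + real (card {A \<in> Tup W a. Cf dd A \<ge> real a * ?mu / 4})"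
    by linarith
  have "nn ^ b * real (card Bad) \<le> nn ^ b * (4 * K * nn ^ (a+1) / (real a * sig) + 4 * real a * K^2 * nn ^ a / sig)"
    using cB cheb markov nn_pos by (intro mult_left_mono) auto
  also have "\<dots> = nn ^ (a + b) * (4 * K * nn / (real a * sig) + 4 * real a * K^2 / sig)"
    by (simp add: power_add distrib_left mult_ac)
  finally have 2: "nn ^ b * real (card Bad) \<le> nn ^ (a + b) * (4 * K * nn / (real a * sig) + 4 * real a * K^2 / sig)" .
  have 3: "nn ^ a * (nn ^ b * ex) = nn ^ (a + b) * ex" by (simp add: power_add)
  have 4: "nn ^ (a + b) * (ex + 4 * K * nn / (real a * sig) + 4 * real a * K^2 / sig)
     = nn ^ (a + b) * ex + nn ^ (a + b) * (4 * K * nn / (real a * sig) + 4 * real a * K^2 / sig)"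
    by (simp add: distrib_left)
  show ?thesis using main 2 3 4 unfolding ex_def[symmetric] by linarith
qed

end


lemma fr_Nil[simp]: "freely_reduced []" and fr_single[simp]: "freely_reduced [a]"
  by (auto simp: freely_reduced_def)

lemma fr_Cons: "freely_reduced (a # w) \<longleftrightarrow> (w \<noteq> [] \<longrightarrow> hd w \<noteq> inv_letter a) \<and> freely_reduced w"
proof (cases w)
  case Nil then show ?thesis by simp
next
  case (Cons b w')
  have "freely_reduced (a # b # w') \<longleftrightarrow> b \<noteq> inv_letter a \<and> freely_reduced (b # w')"
  proof
    assume h: "freely_reduced (a # b # w')"
    have "b \<noteq> inv_letter a" using h[unfolded freely_reduced_def, rule_format, of 0] by simp
    moreover have "freely_reduced (b # w')" unfolding freely_reduced_def
    proof (intro allI impI)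
      fix i assume "Suc i < length (b # w')"
      then show "(b # w') ! Suc i \<noteq> inv_letter ((b # w') ! i)"
        using h[unfolded freely_reduced_def, rule_format, of "Suc i"] by simp
    qed
    ultimately show "b \<noteq> inv_letter a \<and> freely_reduced (b # w')" by simp
  next
    assume h: "b \<noteq> inv_letter a \<and> freely_reduced (b # w')"
    show "freely_reduced (a # b # w')" unfolding freely_reduced_def
    proof (intro allI impI)
      fix i assume i: "Suc i < length (a # b # w')"
      show "(a # b # w') ! Suc i \<noteq> inv_letter ((a # b # w') ! i)"
      proof (cases i)
        case 0 then show ?thesis using h by simp
      next
        case (Suc j) then show ?thesis
          using h[THEN conjunct2, unfolded freely_reduced_def, rule_format, of j] i by simp
      qed
    qed
  qed
  then show ?thesis using Cons by simp
qed

lemma fr_Cons_Cons: "freely_reduced (a # b # w) \<longleftrightarrow> b \<noteq> inv_letter a \<and> freely_reduced (b # w)"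
  by (simp add: fr_Cons[of a])

lemma fr_append_single: "freely_reduced (xs @ c # ys) \<longleftrightarrow> freely_reduced (xs @ [c]) \<and> freely_reduced (c # ys)"
proof (induction xs)
  case Nil then show ?case by simp
next
  case (Cons a xs)
  have "freely_reduced ((a # xs) @ c # ys) \<longleftrightarrow> hd (xs @ c # ys) \<noteq> inv_letter a \<and> freely_reduced (xs @ c # ys)"
    by (simp add: fr_Cons[of a])
  moreover have "freely_reduced ((a # xs) @ [c]) \<longleftrightarrow> hd (xs @ [c]) \<noteq> inv_letter a \<and> freely_reduced (xs @ [c])"
    by (simp add: fr_Cons[of a])
  moreover have "hd (xs @ c # ys) = hd (xs @ [c])" by (cases xs) auto
  ultimately show ?case using Cons by auto
qed

lemma inv_letter_swap: "a \<noteq> inv_letter b \<longleftrightarrow> b \<noteq> inv_letter a"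
  by (metis inv_letter_inv)

lemma fr_snoc: "freely_reduced (w @ [a]) \<longleftrightarrow> freely_reduced w \<and> (w \<noteq> [] \<longrightarrow> a \<noteq> inv_letter (last w))"
proof (induction w)
  case Nil then show ?case by simp
next
  case (Cons b w)
  show ?case
  proof (cases w)
    case Nil then show ?thesis by (simp add: fr_Cons)
  next
    case (Cons c w')
    then show ?thesis using Cons.IH by (simp add: fr_Cons[of b])
  qed
qed

lemma fr_rev: "freely_reduced (rev w) \<longleftrightarrow> freely_reduced w"
proof (induction w)
  case Nil then show ?case by simp
next
  case (Cons a w)
  have "freely_reduced (rev (a # w)) \<longleftrightarrow> freely_reduced w \<and> (w \<noteq> [] \<longrightarrow> a \<noteq> inv_letter (hd w))"
    using Cons by (simp add: fr_snoc last_rev)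
  then show ?case using inv_letter_swap by (auto simp: fr_Cons)
qed

lemma finite_letters: "finite (letters m)" by (simp add: letters_def)
lemma card_letters: "card (letters m) = 2 * m" by (simp add: letters_def card_cartesian_product)

definition ext :: "nat \<Rightarrow> letter \<Rightarrow> nat \<Rightarrow> letter list set" where
  "ext m a n = {v. set v \<subseteq> letters m \<and> length v = n \<and> freely_reduced (a # v)}"

lemma finite_ext: "finite (ext m a n)"
  unfolding ext_def using finite_lists_length_eq[OF finite_letters, of m n]
  by (rule finite_subset[rotated]) auto

lemma ext_Suc: "ext m a (Suc n) = (\<lambda>(c, v). c # v) ` (SIGMA c:letters m - {inv_letter a}. ext m c n)"
proof (intro equalityI subsetI)
  fix w assume "w \<in> ext m a (Suc n)"
  then obtain c v where w: "w = c # v" "c \<in> letters m" "set v \<subseteq> letters m" "length v = n"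
    "c \<noteq> inv_letter a" "freely_reduced (c # v)"
    by (auto simp: ext_def length_Suc_conv fr_Cons_Cons)
  then show "w \<in> (\<lambda>(c, v). c # v) ` (SIGMA c:letters m - {inv_letter a}. ext m c n)"
    by (auto simp: ext_def)
next
  fix w assume "w \<in> (\<lambda>(c, v). c # v) ` (SIGMA c:letters m - {inv_letter a}. ext m c n)"
  then show "w \<in> ext m a (Suc n)" by (auto simp: ext_def fr_Cons_Cons)
qed

lemma card_ext: "a \<in> letters m \<Longrightarrow> card (ext m a n) = (2 * m - 1) ^ n"
proof (induction n arbitrary: a)
  case 0
  have "ext m a 0 = {[]}" by (auto simp: ext_def)
  then show ?case by simp
next
  case (Suc n)
  have inj: "inj_on (\<lambda>(c, v). c # v) (SIGMA c:letters m - {inv_letter a}. ext m c n)"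
    by (auto simp: inj_on_def)
  have "card (ext m a (Suc n)) = card (SIGMA c:letters m - {inv_letter a}. ext m c n)"
    unfolding ext_Suc by (rule card_image[OF inj])
  also have "\<dots> = (\<Sum>c\<in>letters m - {inv_letter a}. card (ext m c n))"
    using finite_letters finite_ext by (intro card_SigmaI) auto
  also have "\<dots> = (\<Sum>c\<in>letters m - {inv_letter a}. (2 * m - 1) ^ n)"
    using Suc.IH by (intro sum.cong) auto
  also have "\<dots> = (2 * m - 1) * (2 * m - 1) ^ n"
    using Suc.prems inv_letter_in[OF Suc.prems] finite_letters by (simp add: card_letters)
  finally show ?case by simp
qed

lemma W_Suc: "reduced_words m (Suc n) = (\<lambda>(a, v). a # v) ` (SIGMA a:letters m. ext m a n)"
  by (auto simp: reduced_words_def ext_def length_Suc_conv image_iff)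

lemma card_W: "card (reduced_words m (Suc n)) = 2 * m * (2 * m - 1) ^ n"
proof -
  have inj: "inj_on (\<lambda>(a, v). a # v) (SIGMA a:letters m. ext m a n)" by (auto simp: inj_on_def)
  have "card (reduced_words m (Suc n)) = (\<Sum>a\<in>letters m. card (ext m a n))"
    unfolding W_Suc card_image[OF inj] using finite_letters finite_ext by (intro card_SigmaI) auto
  also have "\<dots> = (\<Sum>a\<in>letters m. (2 * m - 1) ^ n)" using card_ext by (intro sum.cong) auto
  finally show ?thesis by (simp add: card_letters)
qed

lemma finite_W: "finite (reduced_words m l)"
  unfolding reduced_words_def using finite_lists_length_eq[OF finite_letters, of m l]
  by (rule finite_subset[rotated]) auto

definition pat :: "letter \<Rightarrow> letter \<Rightarrow> letter list \<Rightarrow> nat \<Rightarrow> bool" where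
  "pat z x w q \<longleftrightarrow> Suc (Suc q) < length w \<and> w ! q = z \<and> w ! Suc q = x \<and> w ! Suc (Suc q) = z"

definition Xs :: "letter \<Rightarrow> letter \<Rightarrow> letter \<Rightarrow> letter list \<Rightarrow> letter list set" where
  "Xs x y z w = (\<lambda>q. w[Suc q := y]) ` {q. pat z x w q}"

lemma pat_decomp:
  assumes "pat z x w q"
  shows "w = take q w @ z # x # z # drop (Suc (Suc (Suc q))) w"
proof -
  have l: "Suc (Suc q) < length w" using assms by (simp add: pat_def)
  have "w = take q w @ drop q w" by simp
  also have "drop q w = w ! q # w ! Suc q # w ! Suc (Suc q) # drop (Suc (Suc (Suc q))) w"
    using l by (simp add: Cons_nth_drop_Suc)
  finally show ?thesis using assms by (simp add: pat_def)
qed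

lemma pat_count:
  assumes m: "m \<ge> 1" and xz: "x \<in> letters m" "z \<in> letters m" "x \<noteq> inv_letter z"
    and q: "q + 3 \<le> l"
  shows "(2 * m - 1) ^ (l - 3) \<le> card {w \<in> reduced_words m l. pat z x w q}"
proof -
  define r where "r = l - q - 3"
  define \<phi> where "\<phi> = (\<lambda>(u, v). rev u @ z # x # z # v)"
  have inj: "inj_on \<phi> (ext m z q \<times> ext m z r)"
  proof (rule inj_onI, clarsimp simp: \<phi>_def)
    fix u v u' v' assume h: "u \<in> ext m z q" "v \<in> ext m z r" "u' \<in> ext m z q" "v' \<in> ext m z r"
      "rev u @ z # x # z # v = rev u' @ z # x # z # v'"
    have "length (rev u) = length (rev u')" using h by (simp add: ext_def)
    then show "u = u' \<and> v = v'" using h(5) by auto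
  qed
  have sub: "\<phi> ` (ext m z q \<times> ext m z r) \<subseteq> {w \<in> reduced_words m l. pat z x w q}"
  proof clarsimp
    fix u v assume h: "u \<in> ext m z q" "v \<in> ext m z r"
    have lu: "length u = q" and lv: "length v = r" using h by (auto simp: ext_def)
    have fr1: "freely_reduced (rev u @ [z])"
      using h(1) fr_rev[of "z # u"] by (simp add: ext_def)
    have fr2: "freely_reduced (z # x # z # v)"
      using h(2) xz by (simp add: ext_def fr_Cons_Cons inv_letter_swap)
    have "freely_reduced (rev u @ z # x # z # v)" using fr1 fr2 fr_append_single by blast
    moreover have "set (rev u @ z # x # z # v) \<subseteq> letters m" using h xz by (auto simp: ext_def)
    moreover have "length (rev u @ z # x # z # v) = l" using lu lv q by (simp add: r_def)
    moreover have "pat z x (rev u @ z # x # z # v) q" using lu lv q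
      by (simp add: pat_def nth_append)
    ultimately show "\<phi> (u, v) \<in> reduced_words m l \<and> pat z x (\<phi> (u, v)) q"
      by (simp add: \<phi>_def reduced_words_def)
  qed
  have "card (ext m z q \<times> ext m z r) = (2 * m - 1) ^ q * (2 * m - 1) ^ r"
    using xz by (simp add: card_cartesian_product card_ext)
  also have "\<dots> = (2 * m - 1) ^ (l - 3)" using q by (simp add: r_def power_add[symmetric])
  finally have "card (ext m z q \<times> ext m z r) = (2 * m - 1) ^ (l - 3)" .
  moreover have "card (ext m z q \<times> ext m z r) \<le> card {w \<in> reduced_words m l. pat z x w q}"
    using card_inj_on_le[OF inj sub] finite_W by simp
  ultimately show ?thesis by simp
qed


locale trip =
  fixes m :: nat and x y z :: letter
  assumes m1: "m \<ge> 1" and xin: "x \<in> letters m" and yin: "y \<in> letters m" and zin: "z \<in> letters m"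
    and xy: "x \<noteq> y" and xz: "x \<noteq> inv_letter z" and yz: "y \<noteq> inv_letter z"
begin

lemma Xs_W: assumes "w \<in> reduced_words m l" shows "Xs x y z w \<subseteq> reduced_words m l"
proof
  fix v assume "v \<in> Xs x y z w"
  then obtain q where q: "pat z x w q" "v = w[Suc q := y]" by (auto simp: Xs_def)
  define u where "u = take q w"
  define s where "s = drop (Suc (Suc (Suc q))) w"
  have w: "w = u @ z # x # z # s" using pat_decomp[OF q(1)] by (simp add: u_def s_def)
  have lu: "length u = q" using q(1) by (simp add: u_def pat_def)
  have v: "v = u @ z # y # z # s" using q(2) lu by (subst (asm) w) (simp add: list_update_append)
  have fw: "freely_reduced w" using assms by (simp add: reduced_words_def)
  then have f1: "freely_reduced (u @ [z])" and f2: "freely_reduced (z # s)"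
    using w fr_append_single[of u z "x # z # s"] by (auto simp: fr_Cons_Cons)
  have "freely_reduced (z # y # z # s)" using f2 yz inv_letter_swap[of z y] by (simp add: fr_Cons_Cons)
  then have "freely_reduced v" using f1 v fr_append_single by blast
  moreover have "set v \<subseteq> insert y (set w)" using q(2) set_update_subset_insert by metis
  then have "set v \<subseteq> letters m" using assms yin by (auto simp: reduced_words_def)
  moreover have "length v = l" using assms q(2) by (simp add: reduced_words_def)
  ultimately show "v \<in> reduced_words m l" by (simp add: reduced_words_def)
qed

lemma Xs_inj: "inj_on (\<lambda>q. w[Suc q := y]) {q. pat z x w q}"
proof (rule inj_onI)
  fix q q' assume h: "q \<in> {q. pat z x w q}" "q' \<in> {q. pat z x w q}" "w[Suc q := y] = w[Suc q' := y]"
  show "q = q'"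
  proof (rule ccontr)
    assume "q \<noteq> q'"
    have "w[Suc q := y] ! Suc q = y" using h(1) by (simp add: pat_def)
    moreover have "w[Suc q' := y] ! Suc q = x" using h(1) \<open>q \<noteq> q'\<close> by (simp add: pat_def)
    ultimately show False using h(3) xy by simp
  qed
qed

lemma pat_sub: "{q. pat z x w q} \<subseteq> {..<length w}" by (auto simp: pat_def)

lemma Xs_card: "card (Xs x y z w) = card {q. pat z x w q}"
  unfolding Xs_def by (rule card_image[OF Xs_inj])

lemma Xs_card_le: "card (Xs x y z w) \<le> length w"
  unfolding Xs_card using card_mono[OF _ pat_sub] by fastforce

lemma Xs_inv: "card {w \<in> reduced_words m l. v \<in> Xs x y z w} \<le> l"
proof -
  have "{w \<in> reduced_words m l. v \<in> Xs x y z w} \<subseteq> (\<lambda>i. v[i := x]) ` {..<l}"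
  proof clarify
    fix w assume h: "w \<in> reduced_words m l" "v \<in> Xs x y z w"
    then obtain q where q: "pat z x w q" "v = w[Suc q := y]" by (auto simp: Xs_def)
    have wx: "w ! Suc q = x" using q by (simp add: pat_def)
    have "v[Suc q := x] = w" using q(2) wx by (metis list_update_id list_update_overwrite)
    then have "w = v[Suc q := x]" by simp
    moreover have "Suc q < l" using q h by (auto simp: pat_def reduced_words_def)
    ultimately show "w \<in> (\<lambda>i. v[i := x]) ` {..<l}" by auto
  qed
  then have "card {w \<in> reduced_words m l. v \<in> Xs x y z w} \<le> card ((\<lambda>i. v[i := x]) ` {..<l})"
    by (intro card_mono) auto
  also have "\<dots> \<le> l" using card_image_le[of "{..<l}"] by simp
  finally show ?thesis .
qed

lemma sig_bound:
  assumes l: "l \<ge> 3"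
  shows "real (l - 2) * real (2 * m - 1) ^ (l - 3) \<le> (\<Sum>w\<in>reduced_words m l. real (card (Xs x y z w)))"
proof -
  have "(\<Sum>w\<in>reduced_words m l. card (Xs x y z w)) = (\<Sum>w\<in>reduced_words m l. card {q\<in>{..<l}. pat z x w q})"
    using pat_sub by (intro sum.cong refl) (auto simp: Xs_card reduced_words_def intro!: arg_cong[where f=card])
  also have "\<dots> = (\<Sum>q\<in>{..<l}. card {w\<in>reduced_words m l. pat z x w q})"
    by (rule sum_card_swap[OF finite_W]) simp
  finally have e: "(\<Sum>w\<in>reduced_words m l. card (Xs x y z w)) = (\<Sum>q\<in>{..<l}. card {w\<in>reduced_words m l. pat z x w q})" .
  have "(\<Sum>q\<in>{..<l-2}. (2 * m - 1) ^ (l - 3)) \<le> (\<Sum>q\<in>{..<l-2}. card {w\<in>reduced_words m l. pat z x w q})"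
    using l by (intro sum_mono pat_count[OF m1 xin zin xz]) auto
  also have "\<dots> \<le> (\<Sum>q\<in>{..<l}. card {w\<in>reduced_words m l. pat z x w q})"
    by (intro sum_mono2) auto
  also note e[symmetric]
  finally have "(l - 2) * (2 * m - 1) ^ (l - 3) \<le> (\<Sum>w\<in>reduced_words m l. card (Xs x y z w))" by simp
  then have "real ((l - 2) * (2 * m - 1) ^ (l - 3)) \<le> real (\<Sum>w\<in>reduced_words m l. card (Xs x y z w))"
    by (simp only: of_nat_le_iff)
  then show ?thesis by simp
qed

lemma hit_inst: "l \<ge> 1 \<Longrightarrow> hit (reduced_words m l) (Xs x y z) (real l)"
proof unfold_locales
  assume l: "l \<ge> 1"
  show "finite (reduced_words m l)" by (rule finite_W)
  have "card (reduced_words m l) > 0"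
    using card_W[of m "l - 1"] l m1 by simp
  then show "reduced_words m l \<noteq> {}" by auto
  show "Xs x y z w \<subseteq> reduced_words m l" if "w \<in> reduced_words m l" for w using Xs_W[OF that] .
  show "real (card (Xs x y z w)) \<le> real l" if "w \<in> reduced_words m l" for w
    using Xs_card_le[of w] that by (simp add: reduced_words_def)
  show "real (card {w \<in> reduced_words m l. v \<in> Xs x y z w}) \<le> real l" for v
    using Xs_inv[of l v] by simp
qed

lemma Xs_split: "v \<in> Xs x y z u \<Longrightarrow> \<exists>U V. u = U @ [x] @ V \<and> v = U @ [y] @ V"
proof -
  assume "v \<in> Xs x y z u"
  then obtain q where q: "pat z x u q" "v = u[Suc q := y]" by (auto simp: Xs_def)
  define U where "U = take (Suc q) u"
  define V where "V = drop (Suc (Suc q)) u"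
  have l: "Suc q < length u" using q by (simp add: pat_def)
  have "u = U @ [u ! Suc q] @ V" using id_take_nth_drop[OF l] by (simp add: U_def V_def)
  moreover have "v = U @ [y] @ V" using upd_conv_take_nth_drop[OF l, of y] q(2) by (simp add: U_def V_def)
  ultimately show ?thesis using q by (auto simp: pat_def)
qed

end


definition Bf :: "real \<Rightarrow> nat \<Rightarrow> nat \<Rightarrow> nat \<Rightarrow> real" where
  "Bf \<beta> l a b = exp (- (real a * real b * (real l - 2) / (4 * (\<beta> + 1)^2 * \<beta> ^ (l + 1))))
     + 4 * real l * (\<beta> + 1) * \<beta>^2 / (real a * (real l - 2))
     + 4 * real a * real l ^ 2 / ((real l - 2) * \<beta> ^ (l - 3))"

lemma Bf_nonneg: "\<beta> > 0 \<Longrightarrow> l \<ge> 3 \<Longrightarrow> Bf \<beta> l a b \<ge> 0"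
  unfolding Bf_def by (intro add_nonneg_nonneg) (auto intro!: divide_nonneg_nonneg mult_nonneg_nonneg)

lemma div_cancel_aux: "(q::real) \<noteq> 0 \<Longrightarrow> X / Y = (X * q) / (Y * q)" by simp

context trip begin

lemma trip_bound:
  assumes l: "l \<ge> 3" and a: "a \<ge> 1"
  shows "real (card {rs \<in> Tup (reduced_words m l) (a + b).
            \<not> (\<exists>u\<in>set (take a rs). \<exists>v\<in>set (drop a rs). v \<in> Xs x y z u)})
     \<le> real (card (reduced_words m l)) ^ (a + b) * Bf (real (2 * m - 1)) l a b"
proof -
  let ?W = "reduced_words m l"
  define \<beta> where "\<beta> = real (2 * m - 1)"
  interpret H: hit ?W "Xs x y z" "real l" using hit_inst l by auto
  obtain k where k: "l = k + 3" using l by (metis add.commute le_iff_add)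
  have \<beta>: "\<beta> \<ge> 1" using m1 by (simp add: \<beta>_def)
  have nn: "H.nn = (\<beta> + 1) * \<beta> ^ (k + 2)"
  proof -
    have "card ?W = card (reduced_words m (Suc (k + 2)))" using k by (simp add: numeral_3_eq_3)
    also have "\<dots> = 2 * m * (2 * m - 1) ^ (k + 2)" by (rule card_W)
    finally have cw: "card ?W = 2 * m * (2 * m - 1) ^ (k + 2)" .
    have "H.nn = real (2 * m * (2 * m - 1) ^ (k + 2))" unfolding H.nn_def cw ..
    also have "\<dots> = (\<beta> + 1) * \<beta> ^ (k + 2)" using m1 by (simp add: \<beta>_def of_nat_diff)
    finally show ?thesis .
  qed
  define s0 where "s0 = (real l - 2) * \<beta> ^ (l - 3)"
  have s0: "s0 \<le> H.sig" unfolding H.sig_def using sig_bound[OF l] l by (simp add: s0_def \<beta>_def of_nat_diff)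
  have lk: "l - 3 = k" using k by simp
  have s0p: "s0 > 0" using \<beta> l by (simp add: s0_def)
  have sp: "H.sig > 0" using s0 s0p by linarith
  have nnp: "H.nn > 0" by (rule H.nn_pos)
  note mb = H.miss_bound[OF a sp, of b]
  have t1: "exp (- (real a * real b * H.sig / (4 * H.nn^2))) \<le> exp (- (real a * real b * (real l - 2) / (4 * (\<beta> + 1)^2 * \<beta> ^ (l + 1))))"
  proof -
    have "real a * real b * (real l - 2) / (4 * (\<beta> + 1)^2 * \<beta> ^ (l + 1)) = real a * real b * s0 / (4 * H.nn^2)"
    proof -
      have ex: "(k + 2) * 2 = (k + 4) + k" by simp
      have p: "(\<beta> ^ (k + 2))^2 = \<beta> ^ (k + 4) * \<beta> ^ k"
        by (simp only: power_mult[symmetric] power_add[symmetric] ex)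
      have l1: "l + 1 = k + 4" using k by simp
      have "real a * real b * s0 / (4 * H.nn^2) = (real a * real b * (real l - 2) * \<beta> ^ k) / ((4 * (\<beta> + 1)^2 * \<beta> ^ (k + 4)) * \<beta> ^ k)"
        unfolding s0_def lk nn power_mult_distrib p by (simp add: mult_ac)
      also have "\<dots> = real a * real b * (real l - 2) / (4 * (\<beta> + 1)^2 * \<beta> ^ (k + 4))"
        using \<beta> by (intro div_cancel_aux[symmetric]) auto
      finally show ?thesis unfolding l1 by simp
    qed
    also have "\<dots> \<le> real a * real b * H.sig / (4 * H.nn^2)"
      using s0 nnp by (intro divide_right_mono mult_left_mono) auto
    finally show ?thesis by simp
  qed
  have t2: "4 * real l * H.nn / (real a * H.sig) \<le> 4 * real l * (\<beta> + 1) * \<beta>^2 / (real a * (real l - 2))"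
  proof -
    have "4 * real l * H.nn / (real a * H.sig) \<le> 4 * real l * H.nn / (real a * s0)"
      using s0 s0p a nnp by (intro divide_left_mono mult_left_mono mult_pos_pos) auto
    also have "\<dots> = 4 * real l * (\<beta> + 1) * \<beta>^2 / (real a * (real l - 2))"
    proof -
      have "4 * real l * H.nn / (real a * s0) = (4 * real l * (\<beta> + 1) * \<beta>^2 * \<beta> ^ k) / ((real a * (real l - 2)) * \<beta> ^ k)"
        unfolding nn s0_def lk by (simp add: power_add mult_ac power2_eq_square)
      also have "\<dots> = 4 * real l * (\<beta> + 1) * \<beta>^2 / (real a * (real l - 2))"
        using \<beta> by (intro div_cancel_aux[symmetric]) auto
      finally show ?thesis .
    qed
    finally show ?thesis .
  qed
  have t3: "4 * real a * real l ^ 2 / H.sig \<le> 4 * real a * real l ^ 2 / ((real l - 2) * \<beta> ^ (l - 3))"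
  proof -
    have "4 * real a * real l ^ 2 / H.sig \<le> 4 * real a * real l ^ 2 / s0"
      using s0 s0p by (intro divide_left_mono) auto
    then show ?thesis by (simp add: s0_def)
  qed
  have "real (card {rs \<in> Tup ?W (a + b). \<not> (\<exists>u\<in>set (take a rs). \<exists>v\<in>set (drop a rs). v \<in> Xs x y z u)})
     \<le> H.nn ^ (a + b) * (exp (- (real a * real b * H.sig / (4 * H.nn^2))) + 4 * real l * H.nn / (real a * H.sig)
          + 4 * real a * (real l)^2 / H.sig)" by (rule mb)
  also have "\<dots> \<le> H.nn ^ (a + b) * Bf \<beta> l a b"
    unfolding Bf_def using nnp by (intro mult_left_mono add_mono t1 t2 t3) auto
  finally show ?thesis by (simp add: H.nn_def \<beta>_def)
qed

end


lemma ab_arith_aux: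
  assumes "Nr \<ge> 4" "Nr - 1 \<le> n" "n \<le> Nr" "n \<le> 2 * a + 1" "2 * a \<le> n" "(a::real) \<ge> 0"
  shows "a \<ge> Nr / 4" "a \<le> Nr" "a * (n - a) \<ge> Nr^2 / 11"
proof -
  show "a \<ge> Nr / 4" using assms by linarith
  show "a \<le> Nr" using assms by linarith
  have x: "2 * a \<ge> Nr - 2" using assms by (smt (verit))
  have y: "2 * (n - a) \<ge> Nr - 1" using assms by (smt (verit))
  have "(Nr - 2) * (Nr - 1) \<le> (2 * a) * (2 * (n - a))"
    using x y assms by (intro mult_mono) auto
  then have p: "(Nr - 2) * (Nr - 1) \<le> 4 * (a * (n - a))" by (simp add: mult_ac)
  moreover have "4 * (Nr^2 / 11) \<le> (Nr - 2) * (Nr - 1)"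
  proof -
    have "0 \<le> (Nr - 4) * (7 * Nr - 5)" using assms by (intro mult_nonneg_nonneg) auto
    then show ?thesis by (simp add: power2_eq_square algebra_simps)
  qed
  ultimately show "a * (n - a) \<ge> Nr^2 / 11" by linarith
qed

lemma ab_arith:
  assumes "Nr \<ge> 4" "Nr - 1 \<le> real N" "real N \<le> Nr"
  shows "real (N div 2) \<ge> Nr / 4" "real (N div 2) \<le> Nr" "real (N div 2) * real (N - N div 2) \<ge> Nr^2 / 11"
proof -
  define a where "a = N div 2"
  have h: "N \<le> 2 * a + 1" "2 * a \<le> N" unfolding a_def by presburger+
  have "real N \<le> real (2 * a + 1)" "real (2 * a) \<le> real N" using h by (simp_all only: of_nat_le_iff)
  then have h2: "real N \<le> 2 * real a + 1" "2 * real a \<le> real N" by simp_all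
  have b1: "real (N - a) = real N - real a" using h by (simp add: of_nat_diff)
  note r = ab_arith_aux[OF assms h2, simplified]
  show "real (N div 2) \<ge> Nr / 4" "real (N div 2) \<le> Nr" "real (N div 2) * real (N - N div 2) \<ge> Nr^2 / 11"
    using r b1 unfolding a_def by auto
qed

lemma Bf_tends:
  fixes b c :: real and N :: "nat \<Rightarrow> nat"
  assumes b: "b \<ge> 3" and c: "c = ln b"
    and N: "eventually (\<lambda>l. N l = nat \<lfloor>exp (c * real l / 2) * (ln (real l) / c) * real l powr (-1/4)\<rfloor>) sequentially"
  shows "((\<lambda>l. Bf b l (N l div 2) (N l - N l div 2)) \<longlonglongrightarrow> 0)"
    "eventually (\<lambda>l. N l div 2 \<ge> 1) sequentially"
proof -
  define Nr where "Nr l = exp (c * real l / 2) * (ln (real l) / c) * real l powr (-1/4)" for l :: nat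
  have cp: "c > 0" using b c by simp
  have bexp: "b = exp c" using b c by simp
  have bpow: "b ^ n = exp (c * real n)" for n
    unfolding bexp by (simp add: exp_of_nat_mult[symmetric] mult.commute)
  have r0: "filterlim Nr at_top sequentially" unfolding Nr_def using cp by real_asymp
  have ev: "eventually (\<lambda>l. Nr l \<ge> 4 \<and> l \<ge> 3 \<and> N l = nat \<lfloor>Nr l\<rfloor>) sequentially"
    using N filterlim_at_top[THEN iffD1, OF r0, rule_format, of 4] eventually_ge_at_top[of 3]
    by eventually_elim (auto simp: Nr_def)
  define K1 where "K1 = 1 / (44 * (b + 1)^2 * b)"
  have K1: "K1 > 0" using b by (simp add: K1_def)
  define U where "U l = exp (- (K1 * ((Nr l)^2 * (real l - 2) / exp (c * real l))))
     + 16 * (b + 1) * b^2 * (real l / (Nr l * (real l - 2)))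
     + 4 * b^3 * (Nr l * real l ^ 2 / ((real l - 2) * exp (c * real l)))" for l
  have U0: "U \<longlonglongrightarrow> 0"
  proof -
    have "((\<lambda>l::nat. exp (- (K1 * ((exp (c * real l / 2) * (ln (real l) / c) * real l powr (-1/4))^2 * (real l - 2) / exp (c * real l))))) \<longlonglongrightarrow> 0)"
      using cp K1 by real_asymp
    moreover have "((\<lambda>l::nat. (16 * (b + 1) * b^2) * (real l / ((exp (c * real l / 2) * (ln (real l) / c) * real l powr (-1/4)) * (real l - 2)))) \<longlonglongrightarrow> 0)"
      using cp by real_asymp
    moreover have "((\<lambda>l::nat. (4 * b^3) * ((exp (c * real l / 2) * (ln (real l) / c) * real l powr (-1/4)) * real l ^ 2 / ((real l - 2) * exp (c * real l)))) \<longlonglongrightarrow> 0)"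
      using cp by real_asymp
    ultimately have "((\<lambda>l. exp (- (K1 * ((Nr l)^2 * (real l - 2) / exp (c * real l))))
     + 16 * (b + 1) * b^2 * (real l / (Nr l * (real l - 2)))
     + 4 * b^3 * (Nr l * real l ^ 2 / ((real l - 2) * exp (c * real l)))) \<longlonglongrightarrow> 0 + 0 + 0)"
      unfolding Nr_def by (intro tendsto_add) auto
    then show ?thesis unfolding U_def by simp
  qed
  have bound: "eventually (\<lambda>l. 0 \<le> Bf b l (N l div 2) (N l - N l div 2) \<and> Bf b l (N l div 2) (N l - N l div 2) \<le> U l) sequentially"
    using ev
  proof eventually_elim
    case (elim l)
    define n where "n = N l"
    have l3: "l \<ge> 3" and Nr4: "Nr l \<ge> 4" using elim by auto
    have nfl: "real n = of_int \<lfloor>Nr l\<rfloor>" using elim Nr4 by (simp add: n_def)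
    have hn: "Nr l - 1 \<le> real n" "real n \<le> Nr l" unfolding nfl by linarith+
    note ab = ab_arith[OF Nr4 hn]
    define a where "a = n div 2"
    define b' where "b' = n - n div 2"
    have ap: "real a > 0" using ab(1) Nr4 by (simp add: a_def)
    have lp: "real l - 2 > 0" using l3 by simp
    have bp: "b > 0" using b by simp
    have t1: "exp (- (real a * real b' * (real l - 2) / (4 * (b + 1)^2 * b ^ (l + 1))))
        \<le> exp (- (K1 * ((Nr l)^2 * (real l - 2) / exp (c * real l))))"
    proof -
      have "K1 * ((Nr l)^2 * (real l - 2) / exp (c * real l)) = (Nr l)^2 / 11 * (real l - 2) / (4 * (b + 1)^2 * b ^ (l + 1))"
        unfolding K1_def using bp by (simp add: bpow[symmetric] field_simps)
      also have "\<dots> \<le> real a * real b' * (real l - 2) / (4 * (b + 1)^2 * b ^ (l + 1))"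
        using ab(3) lp bp by (intro divide_right_mono mult_right_mono) (auto simp: a_def b'_def)
      finally show ?thesis by simp
    qed
    have t2: "4 * real l * (b + 1) * b^2 / (real a * (real l - 2)) \<le> 16 * (b + 1) * b^2 * (real l / (Nr l * (real l - 2)))"
    proof -
      have "4 * real l * (b + 1) * b^2 / (real a * (real l - 2)) \<le> 4 * real l * (b + 1) * b^2 / (Nr l / 4 * (real l - 2))"
        using ab(1) ap lp bp Nr4 by (intro divide_left_mono mult_right_mono mult_pos_pos) (auto simp: a_def)
      also have "\<dots> = 16 * (b + 1) * b^2 * (real l / (Nr l * (real l - 2)))"
        by (simp add: field_simps)
      finally show ?thesis .
    qed
    have t3: "4 * real a * real l ^ 2 / ((real l - 2) * b ^ (l - 3)) \<le> 4 * b^3 * (Nr l * real l ^ 2 / ((real l - 2) * exp (c * real l)))"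
    proof -
      have e: "b ^ l = b ^ (l - 3) * b ^ 3" using l3 by (simp add: power_add[symmetric])
      have "4 * real a * real l ^ 2 / ((real l - 2) * b ^ (l - 3)) \<le> 4 * Nr l * real l ^ 2 / ((real l - 2) * b ^ (l - 3))"
        using ab(2) lp bp by (intro divide_right_mono mult_right_mono) (auto simp: a_def)
      also have "\<dots> = (4 * Nr l * real l ^ 2 * b^3) / (((real l - 2) * b ^ (l - 3)) * b^3)"
        using bp by (intro div_cancel_aux) auto
      also have "\<dots> = 4 * b^3 * (Nr l * real l ^ 2 / ((real l - 2) * b ^ l))"
        unfolding e by (simp add: mult_ac)
      also have "\<dots> = 4 * b^3 * (Nr l * real l ^ 2 / ((real l - 2) * exp (c * real l)))"
        unfolding bpow ..
      finally show ?thesis .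
    qed
    have "Bf b l a b' \<le> U l"
      unfolding Bf_def U_def using t1 t2 t3 by (intro add_mono) auto
    moreover have "Bf b l a b' \<ge> 0" using Bf_nonneg[of b l] bp l3 by simp
    ultimately show ?case by (simp add: a_def b'_def n_def)
  qed
  show "((\<lambda>l. Bf b l (N l div 2) (N l - N l div 2)) \<longlonglongrightarrow> 0)"
  proof (rule tendsto_sandwich[of "\<lambda>_. 0" _ _ U])
    show "eventually (\<lambda>l. 0 \<le> Bf b l (N l div 2) (N l - N l div 2)) sequentially"
      using bound by eventually_elim auto
    show "eventually (\<lambda>l. Bf b l (N l div 2) (N l - N l div 2) \<le> U l) sequentially"
      using bound by eventually_elim auto
  qed (auto simp: U0)
  show "eventually (\<lambda>l. N l div 2 \<ge> 1) sequentially"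
    using ev
  proof eventually_elim
    case (elim l)
    have "real (N l) \<ge> Nr l - 1" using elim by linarith
    then have "real (N l) \<ge> 3" using elim by linarith
    then show ?case by linarith
  qed
qed


definition tx :: "nat \<Rightarrow> letter" where "tx i = (0, True)"
definition ty :: "nat \<Rightarrow> letter" where "ty i = (if i = 0 then (0, False) else (i, True))"
definition tz :: "nat \<Rightarrow> letter" where "tz i = (if i = 0 then (1, True) else (0, True))"

lemma trip_i: "m \<ge> 2 \<Longrightarrow> i < m \<Longrightarrow> trip m (tx i) (ty i) (tz i)"
  by unfold_locales (auto simp: tx_def ty_def tz_def letters_def inv_letter_def)

lemma nr_eq:
  fixes b x :: real assumes b: "b > 1" and x: "x > 1"
  shows "b powr (x * (1/2 - (log b x / (4 * x) - log b (log b x) / x)))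
       = exp (ln b * x / 2) * (ln x / ln b) * x powr (-1/4)"
proof -
  define L where "L = ln x / ln b"
  have lb: "ln b > 0" using b by simp
  have L: "L > 0" using x lb by (simp add: L_def)
  have lx: "log b x = L" by (simp add: log_def L_def)
  have lL: "log b L = ln L / ln b" by (simp add: log_def)
  have e: "x * (1/2 - (log b x / (4 * x) - log b (log b x) / x)) * ln b = ln b * x / 2 + (-1/4) * ln x + ln L"
  proof -
    have "x * (1/2 - (L / (4 * x) - ln L / ln b / x)) = x / 2 - L / 4 + ln L / ln b"
      using x by (simp add: field_simps)
    moreover have "(x / 2 - L / 4 + ln L / ln b) * ln b = ln b * x / 2 + (-1/4) * ln x + ln L"
      using lb by (simp add: L_def field_simps)
    ultimately show ?thesis unfolding lx lL by simp
  qed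
  have "b powr (x * (1/2 - (log b x / (4 * x) - log b (log b x) / x)))
      = exp (x * (1/2 - (log b x / (4 * x) - log b (log b x) / x)) * ln b)"
    using b by (simp add: powr_def)
  also have "\<dots> = exp (ln b * x / 2) * exp ((-1/4) * ln x) * exp (ln L)" unfolding e by (simp only: exp_add)
  also have "\<dots> = exp (ln b * x / 2) * (ln x / ln b) * x powr (-1/4)"
    using x L by (simp add: powr_def L_def)
  finally show ?thesis .
qed

lemma p2_eq:
  fixes b x :: real assumes b: "b > 1" and x: "x > 1"
  shows "(x - 2) / ((2 * ((1/2) * log b x - log b (log b x)) + 2) * b powr (2 * ((1/2) * log b x - log b (log b x))))
       = (x - 2) * (ln x / ln b)^2 / ((ln x / ln b - 2 * ln (ln x / ln b) / ln b + 2) * x)"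
proof -
  define L where "L = ln x / ln b"
  have lb: "ln b > 0" using b by simp
  have L: "L > 0" using x lb by (simp add: L_def)
  have lx: "log b x = L" by (simp add: log_def L_def)
  have lL: "log b L = ln L / ln b" by (simp add: log_def)
  define D where "D = L - 2 * ln L / ln b + 2"
  have D: "2 * ((1/2) * log b x - log b (log b x)) + 2 = D" unfolding lx lL D_def by simp
  have "b powr (2 * ((1/2) * log b x - log b (log b x))) = exp ((L - 2 * ln L / ln b) * ln b)"
    using b unfolding lx lL by (simp add: powr_def algebra_simps)
  also have "(L - 2 * ln L / ln b) * ln b = ln x - 2 * ln L" using lb by (simp add: left_diff_distrib L_def)
  also have "exp (ln x - 2 * ln L) = x / L^2"
  proof -
    have "exp (2 * ln L) = L^2" using L by (simp only: mult_2 exp_add exp_ln power2_eq_square)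
    then show ?thesis using x by (simp add: exp_diff)
  qed
  finally have bp: "b powr (2 * ((1/2) * log b x - log b (log b x))) = x / L^2" .
  have "(x - 2) / (D * (x / L^2)) = (x - 2) * L^2 / (D * x)"
    by (simp only: times_divide_eq_right divide_divide_eq_right)
  then show ?thesis unfolding D bp by (simp add: D_def L_def)
qed

lemma measure_le1: "measure_pmf.prob p A \<le> 1" by (rule measure_pmf.prob_le_1)


lemma prob_lower:
  fixes m l a b' :: nat and f :: "real \<Rightarrow> real"
  assumes m: "m \<ge> 2" and l: "l \<ge> 3" and a: "a \<ge> 1" and N: "num_relators m f l = a + b'"
  shows "random_group_prob m f (\<lambda>G. G \<cong> singleton_group (undefined::int) \<or> G \<cong> integer_mod_group 2) l
     \<ge> 1 - real m * Bf (real (2 * m - 1)) l a b'"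
proof -
  let ?W = "reduced_words m l"
  let ?T = "Tup ?W (a + b')"
  let ?P = "\<lambda>G. G \<cong> singleton_group (undefined::int) \<or> G \<cong> integer_mod_group 2"
  let ?G = "{rs. ?P (pres_group m (set rs))}"
  let ?Ev = "\<lambda>i rs. \<exists>u\<in>set (take a rs). \<exists>v\<in>set (drop a rs). v \<in> Xs (tx i) (ty i) (tz i) u"
  define B where "B = Bf (real (2 * m - 1)) l a b'"
  have cW: "card ?W > 0" using card_W[of m "l - 1"] l m by simp
  have finT: "finite ?T" by (rule finite_Tup[OF finite_W])
  have cT: "card ?T = card ?W ^ (a + b')" by (rule card_Tup[OF finite_W])
  have cTp: "card ?T > 0" using cT cW by simp
  then have Tne: "?T \<noteq> {}" by auto
  have rt: "relator_tuples m f l = pmf_of_set ?T"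
    unfolding relator_tuples_def N Tup_def by (simp add: conj_commute)
  have prob: "random_group_prob m f ?P l = real (card (?T \<inter> ?G)) / real (card ?T)"
    unfolding random_group_prob_def rt by (rule measure_pmf_of_set[OF Tne finT])
  have good: "?P (pres_group m (set rs))" if rs: "rs \<in> ?T" "\<forall>i<m. ?Ev i rs" for rs
  proof -
    have sub: "set rs \<subseteq> ?W" using rs by (auto simp: Tup_def)
    have rel: "([tx i], [ty i]) \<in> pres_rel m (set rs)" if i: "i < m" for i
    proof -
      obtain u v where uv: "u \<in> set (take a rs)" "v \<in> set (drop a rs)" "v \<in> Xs (tx i) (ty i) (tz i) u"
        using rs(2) i by blast
      interpret trip m "tx i" "ty i" "tz i" using trip_i[OF m i] .
      obtain U V where UV: "u = U @ [tx i] @ V" "v = U @ [ty i] @ V" using Xs_split[OF uv(3)] by blast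
      have uv': "u \<in> set rs" "v \<in> set rs" using uv(1,2) set_take_subset set_drop_subset by fast+
      then have "set u \<subseteq> letters m" "set v \<subseteq> letters m" using sub by (auto simp: reduced_words_def)
      then show ?thesis using key_rel[of U "tx i" V "set rs" "ty i" m] UV uv' by simp
    qed
    have a0: "[(0::nat, True)] \<in> {w. set w \<subseteq> letters m}" using m by (simp add: letters_def)
    have gen: "([(i, True)], [(0, True)]) \<in> pres_rel m (set rs)" if "i < m" for i
    proof (cases "i = 0")
      case True then show ?thesis using a0 by (auto intro: pres_rel.refl)
    next
      case False then show ?thesis using rel[OF that] by (auto simp: tx_def ty_def intro: pres_rel.sym)
    qed
    have sq: "([(0, True)], [(0, False)]) \<in> pres_rel m (set rs)" using rel[of 0] m by (simp add: tx_def ty_def)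
    show ?thesis using group_collapse[OF m gen sq] .
  qed
  have subset: "?T - ?G \<subseteq> (\<Union>i<m. {rs \<in> ?T. \<not> ?Ev i rs})"
  proof
    fix rs assume rs: "rs \<in> ?T - ?G"
    have nE: "\<not> (\<forall>i<m. ?Ev i rs)"
    proof
      assume h: "\<forall>i<m. ?Ev i rs"
      have "rs \<in> ?T" using rs by blast
      then have "?P (pres_group m (set rs))" using good h by blast
      then show False using rs by blast
    qed
    from nE obtain i where "i < m" "\<not> ?Ev i rs" by blast
    then show "rs \<in> (\<Union>i<m. {rs \<in> ?T. \<not> ?Ev i rs})" using rs by blast
  qed
  have bnd: "real (card {rs \<in> ?T. \<not> ?Ev i rs}) \<le> real (card ?T) * B" if "i < m" for i
  proof -
    interpret trip m "tx i" "ty i" "tz i" using trip_i[OF m that] .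
    show ?thesis using trip_bound[OF l a, of b'] cT by (simp add: B_def)
  qed
  have "card (?T - ?G) \<le> card (\<Union>i<m. {rs \<in> ?T. \<not> ?Ev i rs})"
    using finT by (intro card_mono[OF _ subset]) auto
  also have "\<dots> \<le> (\<Sum>i<m. card {rs \<in> ?T. \<not> ?Ev i rs})" by (rule card_UN_le) auto
  finally have "real (card (?T - ?G)) \<le> real (\<Sum>i<m. card {rs \<in> ?T. \<not> ?Ev i rs})"
    by (simp only: of_nat_le_iff)
  also have "\<dots> = (\<Sum>i<m. real (card {rs \<in> ?T. \<not> ?Ev i rs}))" by (rule of_nat_sum)
  also have "\<dots> \<le> (\<Sum>i<m. real (card ?T) * B)" using bnd by (intro sum_mono) auto
  also have "\<dots> = real m * real (card ?T) * B" by simp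
  finally have d: "real (card (?T - ?G)) \<le> real m * real (card ?T) * B" .
  have "card ?T = card ((?T \<inter> ?G) \<union> (?T - ?G))" by (simp only: Int_Diff_Un)
  also have "\<dots> = card (?T \<inter> ?G) + card (?T - ?G)" using finT by (intro card_Un_disjoint) auto
  finally have s: "real (card ?T) = real (card (?T \<inter> ?G)) + real (card (?T - ?G))" by simp
  have "1 - real m * B = (real (card ?T) - real m * real (card ?T) * B) / real (card ?T)"
    using cTp by (simp add: field_simps)
  also have "\<dots> \<le> real (card (?T \<inter> ?G)) / real (card ?T)"
    using s d cTp by (intro divide_right_mono) auto
  finally show ?thesis unfolding prob B_def .
qed


theorem corollary3p2:
  fixes m :: nat
  assumes "m \<ge> 2"
  defines "b \<equiv> 2 * real m - 1"
  defines "k \<equiv> (\<lambda>l::real. (1/2) * log b l - log b (log b l))"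
  defines "f \<equiv> (\<lambda>l::real. log b l / (4 * l) - log b (log b l) / l)"
  shows "filterlim (\<lambda>l::nat. k (real l) - 2 * real l * f (real l)) at_top sequentially
       \<and> filterlim (\<lambda>l::nat. (real l - 2) / ((2 * k (real l) + 2) * b powr (2 * k (real l))))
           at_top sequentially
       \<and> (random_group_prob m f
            (\<lambda>G. G \<cong> singleton_group (undefined::int) \<or> G \<cong> integer_mod_group 2)
          \<longlonglongrightarrow> 1)"
proof -
  have m: "m \<ge> 2" by (rule assms(1))
  have b3: "b \<ge> 3" using m by (simp add: b_def)
  have b1: "b > 1" using b3 by simp
  have lb: "ln b > 0" using b1 by simp
  have bnat: "real (2 * m - 1) = b" using m by (simp add: b_def of_nat_diff)
  have P1: "filterlim (\<lambda>l::nat. k (real l) - 2 * real l * f (real l)) at_top sequentially"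
    unfolding k_def f_def log_def using lb by real_asymp
  have P2: "filterlim (\<lambda>l::nat. (real l - 2) / ((2 * k (real l) + 2) * b powr (2 * k (real l)))) at_top sequentially"
  proof -
    have lim: "filterlim (\<lambda>l::nat. (real l - 2) * (ln (real l) / ln b)^2 / ((ln (real l) / ln b - 2 * ln (ln (real l) / ln b) / ln b + 2) * real l)) at_top sequentially"
      using lb by real_asymp
    have ev: "eventually (\<lambda>l::nat. (real l - 2) * (ln (real l) / ln b)^2 / ((ln (real l) / ln b - 2 * ln (ln (real l) / ln b) / ln b + 2) * real l)
        = (real l - 2) / ((2 * k (real l) + 2) * b powr (2 * k (real l)))) sequentially"
      using eventually_ge_at_top[of 2]
    proof eventually_elim
      case (elim l)
      then have "real l > 1" by simp
      then show ?case unfolding k_def using p2_eq[OF b1, of "real l"] by simp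
    qed
    show ?thesis using filterlim_cong[OF HOL.refl HOL.refl ev] lim by simp
  qed
  define Nf where "Nf l = num_relators m f l" for l
  have N_ev: "eventually (\<lambda>l. Nf l = nat \<lfloor>exp (ln b * real l / 2) * (ln (real l) / ln b) * real l powr (-1/4)\<rfloor>) sequentially"
    using eventually_ge_at_top[of 2]
  proof eventually_elim
    case (elim l)
    then have l1: "real l > 1" by simp
    have "Nf l = nat \<lfloor>b powr (real l * (1/2 - f (real l)))\<rfloor>"
      unfolding Nf_def num_relators_def b_def ..
    also have "b powr (real l * (1/2 - f (real l))) = exp (ln b * real l / 2) * (ln (real l) / ln b) * real l powr (-1/4)"
      unfolding f_def using nr_eq[OF b1 l1] by simp
    finally show ?case .
  qed
  note BT = Bf_tends[OF b3 HOL.refl N_ev]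
  let ?P = "\<lambda>G. G \<cong> singleton_group (undefined::int) \<or> G \<cong> integer_mod_group 2"
  have lower: "eventually (\<lambda>l. 1 - real m * Bf b l (Nf l div 2) (Nf l - Nf l div 2) \<le> random_group_prob m f ?P l) sequentially"
    using BT(2) eventually_ge_at_top[of 3]
  proof eventually_elim
    case (elim l)
    have "Nf l div 2 + (Nf l - Nf l div 2) = Nf l" by simp
    then have N: "num_relators m f l = Nf l div 2 + (Nf l - Nf l div 2)" by (simp add: Nf_def)
    show ?case using prob_lower[OF m elim(2) elim(1) N] bnat by simp
  qed
  have upper: "eventually (\<lambda>l. random_group_prob m f ?P l \<le> 1) sequentially"
    by (simp add: random_group_prob_def measure_pmf.prob_le_1)
  have lim1: "(\<lambda>l. 1 - real m * Bf b l (Nf l div 2) (Nf l - Nf l div 2)) \<longlonglongrightarrow> 1 - real m * 0"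
    by (intro tendsto_intros BT(1))
  have P3: "random_group_prob m f ?P \<longlonglongrightarrow> 1"
    by (rule tendsto_sandwich[OF lower upper]) (use lim1 in auto)
  show ?thesis using P1 P2 P3 by blast
qed


end
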